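(* Let $C>1$ and assume there are $a_1\ge1$, $a_2>0$ with, for all $\xi\in\Gamma_0$, $$\sum_{x\in\xi}\int_{\Gamma_0}|K_0^{-1}d(x,\cdot\cup\xi\setminus x)|(\eta)C^{|\eta|}d\lambda(\eta)\le a_1D(\xi),\quad \sum_{x\in\xi}\int_{\Gamma_0}|K_0^{-1}b(x,\cdot\cup\xi\setminus x)|(\eta)C^{|\eta|}d\lambda(\eta)\le a_2D(\xi).$$ Define, for $G\in\mathcal D$, $$(L_1G)(\eta):=-\sum_{\xi\subsetneq\eta}G(\xi)\sum_{x\in\xi}(K_0^{-1}d(x,\cdot\cup\xi\setminus x))(\eta\setminus\xi)+\sum_{\xi\subset\eta}\int_{\mathbb{R}^d}G(\xi\cup x)(K_0^{-1}b(x,\cdot\cup\xi))(\eta\setminus\xi)\,dx .$$ Then $L_1:\mathcal D\to\mathcal L_C$ is well defined, and with $L_0G=-DG$, $$\|L_1(z\mathbf 1-L_0)^{-1}\|\le a_1-1+\frac{a_2}{C}\quad\text{for all } \operatorname{Re}z>0,\qquad \|L_1G\|_C\le\Bigl(a_1-1+\frac{a_2}{C}\Bigr)\|L_0G\|_C\quad\text{for all }G\in\mathcal D.$$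
   Context: $\Gamma_0$: space of finite subsets of $\mathbb{R}^d$, Lebesgue–Poisson measure $\lambda=\sum_n\frac1{n!}m^{(n)}$. $(K_0^{-1}f(x,\cdot\cup\xi))(\eta):=\sum_{\zeta\subset\eta}(-1)^{|\eta\setminus\zeta|}f(x,\zeta\cup\xi)$. $d,b\ge0$ finite measurable rates on $\mathbb{R}^d\times\Gamma_0$; $D(\eta)=\sum_{x\in\eta}d(x,\eta\setminus x)$; $\mathcal L_C=L^1(\Gamma_0,C^{|\eta|}d\lambda)$ with norm $\|\cdot\|_C$; $\mathcal D=\{G\in\mathcal L_C:DG\in\mathcal L_C\}$; $(L_0G)(\eta)=-D(\eta)G(\eta)$ on $\mathcal D$. *)

theory Defs
  imports "HOL-Analysis.Analysis"
begin

text \<open>Points of R^d are modelled by an arbitrary Euclidean space 'a.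
Configurations in Gamma_0 are finite sets of type 'a set; functions on Gamma_0
are functions on 'a set (only their values on finite sets matter).\<close>

definition cfg :: "nat \<Rightarrow> (nat \<Rightarrow> 'a) \<Rightarrow> 'a set" where
  "cfg n x = x ` {..<n}"

text \<open>Lebesgue--Poisson integral of a nonnegative function:
  lambda = sum_n 1/n! m^(n), i.e. int f d lambda = sum_n 1/n! int_{(R^d)^n} f({x_1..x_n}) dx.\<close>
definition LP_nn :: "('a::euclidean_space set \<Rightarrow> ennreal) \<Rightarrow> ennreal" where
  "LP_nn f = (\<Sum>n. ennreal (1 / fact n) *
      (\<integral>\<^sup>+ x. f (cfg n x) \<partial>(PiM {..<n} (\<lambda>_. (lborel :: 'a measure)))))"

definition LP_ae :: "('a::euclidean_space set \<Rightarrow> bool) \<Rightarrow> bool" where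
  "LP_ae P \<longleftrightarrow> LP_nn (\<lambda>\<eta>. if P \<eta> then 0 else 1) = 0"

definition LP_meas :: "('a::euclidean_space set \<Rightarrow> complex) \<Rightarrow> bool" where
  "LP_meas G \<longleftrightarrow> (\<forall>n. (\<lambda>x. G (cfg n x)) \<in> borel_measurable (PiM {..<n} (\<lambda>_. (lborel :: 'a measure))))"

definition rate_meas :: "('a::euclidean_space \<Rightarrow> 'a set \<Rightarrow> real) \<Rightarrow> bool" where
  "rate_meas r \<longleftrightarrow> (\<forall>n. (\<lambda>(x, y). r x (cfg n y))
      \<in> borel_measurable ((lborel :: 'a measure) \<Otimes>\<^sub>M PiM {..<n} (\<lambda>_. (lborel :: 'a measure))))"

definition normC :: "real \<Rightarrow> ('a::euclidean_space set \<Rightarrow> complex) \<Rightarrow> ennreal" where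
  "normC C G = LP_nn (\<lambda>\<eta>. ennreal (cmod (G \<eta>) * C ^ card \<eta>))"

definition LC :: "real \<Rightarrow> ('a::euclidean_space set \<Rightarrow> complex) set" where
  "LC C = {G. LP_meas G \<and> normC C G < \<infinity>}"

definition Kinv :: "('a set \<Rightarrow> real) \<Rightarrow> 'a set \<Rightarrow> real" where
  "Kinv f \<eta> = (\<Sum>\<zeta>\<in>Pow \<eta>. (-1) ^ card (\<eta> - \<zeta>) * f \<zeta>)"

definition Dtot :: "('a \<Rightarrow> 'a set \<Rightarrow> real) \<Rightarrow> 'a set \<Rightarrow> real" where
  "Dtot d \<eta> = (\<Sum>x\<in>\<eta>. d x (\<eta> - {x}))"

definition DomD :: "real \<Rightarrow> ('a::euclidean_space \<Rightarrow> 'a set \<Rightarrow> real) \<Rightarrow> ('a set \<Rightarrow> complex) set" where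
  "DomD C d = {G. G \<in> LC C \<and> (\<lambda>\<eta>. of_real (Dtot d \<eta>) * G \<eta>) \<in> LC C}"

definition L0 :: "('a \<Rightarrow> 'a set \<Rightarrow> real) \<Rightarrow> ('a set \<Rightarrow> complex) \<Rightarrow> 'a set \<Rightarrow> complex" where
  "L0 d G \<eta> = - (of_real (Dtot d \<eta>) * G \<eta>)"

definition birth_integrand ::
  "('a \<Rightarrow> 'a set \<Rightarrow> real) \<Rightarrow> ('a set \<Rightarrow> complex) \<Rightarrow> 'a set \<Rightarrow> 'a set \<Rightarrow> 'a \<Rightarrow> complex" where
  "birth_integrand b G \<eta> \<xi> x = G (insert x \<xi>) * of_real (Kinv (\<lambda>\<zeta>. b x (\<zeta> \<union> \<xi>)) (\<eta> - \<xi>))"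

definition L1 :: "('a::euclidean_space \<Rightarrow> 'a set \<Rightarrow> real) \<Rightarrow> ('a \<Rightarrow> 'a set \<Rightarrow> real)
    \<Rightarrow> ('a set \<Rightarrow> complex) \<Rightarrow> 'a set \<Rightarrow> complex" where
  "L1 d b G \<eta> =
     - (\<Sum>\<xi>\<in>{\<xi>. \<xi> \<subset> \<eta>}. G \<xi> * of_real (\<Sum>x\<in>\<xi>. Kinv (\<lambda>\<zeta>. d x (\<zeta> \<union> (\<xi> - {x}))) (\<eta> - \<xi>)))
     + (\<Sum>\<xi>\<in>Pow \<eta>. \<integral>x. birth_integrand b G \<eta> \<xi> x \<partial>lborel)"

end

theory Submission
  imports Defs
begin


abbreviation MM :: "nat \<Rightarrow> (nat \<Rightarrow> 'a::euclidean_space) measure" where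
  "MM n \<equiv> PiM {..<n} (\<lambda>_. (lborel :: 'a measure))"

definition smeas :: "('a::euclidean_space set \<Rightarrow> 'b::topological_space) \<Rightarrow> bool" where
  "smeas g \<longleftrightarrow> (\<forall>n. (\<lambda>x. g (cfg n x)) \<in> borel_measurable (MM n :: (nat \<Rightarrow> 'a) measure))"

definition smeasP :: "('a::euclidean_space set \<Rightarrow> 'a \<Rightarrow> 'b::topological_space) \<Rightarrow> bool" where
  "smeasP H \<longleftrightarrow> (\<forall>n. (\<lambda>(x, t). H (cfg n x) t) \<in> borel_measurable ((MM n :: (nat \<Rightarrow> 'a) measure) \<Otimes>\<^sub>M lborel))"

definition smeas2 :: "('a::euclidean_space set \<Rightarrow> 'a set \<Rightarrow> 'b::topological_space) \<Rightarrow> bool" where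
  "smeas2 F \<longleftrightarrow> (\<forall>k m. (\<lambda>(x, y). F (cfg k x) (cfg m y)) \<in> borel_measurable ((MM k :: (nat \<Rightarrow> 'a) measure) \<Otimes>\<^sub>M MM m))"

lemma cfg_restrict: "cfg k (\<lambda>i\<in>{..<k}. f i) = f ` {..<k}"
  by (auto simp: cfg_def)

lemma finite_cfg[simp]: "finite (cfg n x)"
  by (simp add: cfg_def)

lemma enum_finite:
  assumes "finite A"
  obtains e where "bij_betw e {..<card A} A"
  using ex_bij_betw_nat_finite[OF assms] by (auto simp: atLeast0LessThan)

lemma restrict_meas:
  fixes u :: "'i \<Rightarrow> 'n \<Rightarrow> 'a::euclidean_space"
  assumes e: "bij_betw e {..<k} A" and u: "\<And>i. i \<in> A \<Longrightarrow> u i \<in> borel_measurable N"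
  shows "(\<lambda>\<omega>. \<lambda>i\<in>{..<k}. u (e i) \<omega>) \<in> measurable N (MM k :: (nat \<Rightarrow> 'a) measure)"
  by (rule measurable_restrict) (use e u in \<open>auto simp: bij_betw_def\<close>)

lemma img_enum:
  assumes e: "bij_betw e {..<k} A"
  shows "(\<lambda>i. u i \<omega>) ` A = cfg k (\<lambda>i\<in>{..<k}. u (e i) \<omega>)"
  using e by (auto simp: cfg_def bij_betw_def image_image[symmetric])

lemma S1:
  fixes u :: "'i \<Rightarrow> 'n \<Rightarrow> 'a::euclidean_space"
  assumes g: "smeas g" and A: "finite A" and u: "\<And>i. i \<in> A \<Longrightarrow> u i \<in> borel_measurable N"
  shows "(\<lambda>\<omega>. g ((\<lambda>i. u i \<omega>) ` A)) \<in> borel_measurable N"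
proof -
  obtain e where e: "bij_betw e {..<card A} A" using enum_finite[OF A] by blast
  have "(\<lambda>\<omega>. g (cfg (card A) (\<lambda>i\<in>{..<card A}. u (e i) \<omega>))) \<in> borel_measurable N"
    using measurable_compose[OF restrict_meas[OF e u] g[unfolded smeas_def, rule_format]] by simp
  then show ?thesis by (simp add: img_enum[OF e])
qed

lemma SP1:
  fixes u :: "'i \<Rightarrow> 'n \<Rightarrow> 'a::euclidean_space"
  assumes g: "smeasP H" and A: "finite A" and u: "\<And>i. i \<in> A \<Longrightarrow> u i \<in> borel_measurable N"
    and v: "v \<in> borel_measurable N"
  shows "(\<lambda>\<omega>. H ((\<lambda>i. u i \<omega>) ` A) (v \<omega>)) \<in> borel_measurable N"
proof -
  obtain e where e: "bij_betw e {..<card A} A" using enum_finite[OF A] by blast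
  have m: "(\<lambda>\<omega>. (\<lambda>i\<in>{..<card A}. u (e i) \<omega>, v \<omega>)) \<in> measurable N ((MM (card A) :: (nat \<Rightarrow> 'a) measure) \<Otimes>\<^sub>M lborel)"
    using restrict_meas[OF e u] v by (intro measurable_Pair) auto
  have "(\<lambda>\<omega>. H (cfg (card A) (\<lambda>i\<in>{..<card A}. u (e i) \<omega>)) (v \<omega>)) \<in> borel_measurable N"
    using measurable_compose[OF m g[unfolded smeasP_def, rule_format]] by simp
  then show ?thesis by (simp add: img_enum[OF e])
qed

lemma R1:
  fixes u :: "'i \<Rightarrow> 'n \<Rightarrow> 'a::euclidean_space"
  assumes g: "rate_meas r" and A: "finite A" and u: "\<And>i. i \<in> A \<Longrightarrow> u i \<in> borel_measurable N"
    and v: "v \<in> borel_measurable N"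
  shows "(\<lambda>\<omega>. r (v \<omega>) ((\<lambda>i. u i \<omega>) ` A)) \<in> borel_measurable N"
proof -
  obtain e where e: "bij_betw e {..<card A} A" using enum_finite[OF A] by blast
  have m: "(\<lambda>\<omega>. (v \<omega>, \<lambda>i\<in>{..<card A}. u (e i) \<omega>)) \<in> measurable N (lborel \<Otimes>\<^sub>M (MM (card A) :: (nat \<Rightarrow> 'a) measure))"
    using restrict_meas[OF e u] v by (intro measurable_Pair) auto
  have "(\<lambda>\<omega>. r (v \<omega>) (cfg (card A) (\<lambda>i\<in>{..<card A}. u (e i) \<omega>))) \<in> borel_measurable N"
    using measurable_compose[OF m g[unfolded rate_meas_def, rule_format]] by simp
  then show ?thesis by (simp add: img_enum[OF e])
qed

lemma S21:
  fixes u :: "'i \<Rightarrow> 'n \<Rightarrow> 'a::euclidean_space"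
  assumes g: "smeas2 F" and A: "finite A" "finite B" and u: "\<And>i. i \<in> A \<union> B \<Longrightarrow> u i \<in> borel_measurable N"
  shows "(\<lambda>\<omega>. F ((\<lambda>i. u i \<omega>) ` A) ((\<lambda>i. u i \<omega>) ` B)) \<in> borel_measurable N"
proof -
  obtain e where e: "bij_betw e {..<card A} A" using enum_finite[OF A(1)] by blast
  obtain e' where e': "bij_betw e' {..<card B} B" using enum_finite[OF A(2)] by blast
  have m: "(\<lambda>\<omega>. (\<lambda>i\<in>{..<card A}. u (e i) \<omega>, \<lambda>i\<in>{..<card B}. u (e' i) \<omega>)) \<in> measurable N ((MM (card A) :: (nat \<Rightarrow> 'a) measure) \<Otimes>\<^sub>M (MM (card B)))"
    using restrict_meas[OF e, of u] restrict_meas[OF e', of u] u by (intro measurable_Pair) auto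
  have "(\<lambda>\<omega>. F (cfg (card A) (\<lambda>i\<in>{..<card A}. u (e i) \<omega>)) (cfg (card B) (\<lambda>i\<in>{..<card B}. u (e' i) \<omega>))) \<in> borel_measurable N"
    using measurable_compose[OF m g[unfolded smeas2_def, rule_format]] by simp
  then show ?thesis by (simp add: img_enum[OF e] img_enum[OF e'])
qed

lemma PW:
  assumes A: "finite A" and K: "\<And>\<omega>. \<omega> \<in> space N \<Longrightarrow> K \<omega> \<subseteq> A"
    and S: "\<And>J. J \<subseteq> A \<Longrightarrow> {\<omega>\<in>space N. K \<omega> = J} \<in> sets N"
    and g: "\<And>J. J \<subseteq> A \<Longrightarrow> g J \<in> measurable N M"
  shows "(\<lambda>\<omega>. g (K \<omega>) \<omega>) \<in> measurable N M"
proof (rule measurable_piecewise_restrict[where C="(\<lambda>J. {\<omega>. K \<omega> = J}) ` Pow A"])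
  show "countable ((\<lambda>J. {\<omega>. K \<omega> = J}) ` Pow A)" using A by (intro countable_image countable_finite) auto
  show "\<Omega> \<inter> space N \<in> sets N" if "\<Omega> \<in> (\<lambda>J. {\<omega>. K \<omega> = J}) ` Pow A" for \<Omega>
    using that S by (auto simp: Int_def conj_commute)
  show "space N \<subseteq> \<Union> ((\<lambda>J. {\<omega>. K \<omega> = J}) ` Pow A)" using K by auto
  show "(\<lambda>\<omega>. g (K \<omega>) \<omega>) \<in> measurable (restrict_space N \<Omega>) M" if "\<Omega> \<in> (\<lambda>J. {\<omega>. K \<omega> = J}) ` Pow A" for \<Omega>
  proof -
    from that obtain J where J: "J \<subseteq> A" "\<Omega> = {\<omega>. K \<omega> = J}" by auto
    have "g J \<in> measurable (restrict_space N \<Omega>) M"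
      using g[OF J(1)] by (rule measurable_restrict_space1)
    then show ?thesis
      by (rule measurable_cong[THEN iffD1, rotated]) (auto simp: J space_restrict_space)
  qed
qed

lemma PWf:
  assumes A: "finite A" and P: "\<And>i. i \<in> A \<Longrightarrow> Measurable.pred N (P i)"
    and g: "\<And>J. J \<subseteq> A \<Longrightarrow> g J \<in> measurable N M"
  shows "(\<lambda>\<omega>. g {i\<in>A. P i \<omega>} \<omega>) \<in> measurable N M"
proof (rule PW[OF A _ _ g])
  fix J assume J: "J \<subseteq> A"
  have "{\<omega>\<in>space N. {i\<in>A. P i \<omega>} = J} = {\<omega>\<in>space N. \<forall>i\<in>A. P i \<omega> \<longleftrightarrow> i \<in> J}"
    using J by auto
  also have "\<dots> \<in> sets N"
  proof -
    have "Measurable.pred N (\<lambda>\<omega>. P i \<omega> \<longleftrightarrow> i \<in> J)" if "i \<in> A" for i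
      using P[OF that] pred_intros_logic(2)[OF P[OF that]] by (cases "i \<in> J") simp_all
    then have "Measurable.pred N (\<lambda>\<omega>. \<forall>i\<in>A. P i \<omega> \<longleftrightarrow> i \<in> J)"
      using A by (intro pred_intros_finite) auto
    then show ?thesis unfolding pred_def .
  qed
  finally show "{\<omega>\<in>space N. {i\<in>A. P i \<omega>} = J} \<in> sets N" .
qed auto

lemma pred_eq_pts:
  fixes u v :: "'n \<Rightarrow> 'a::euclidean_space"
  assumes "u \<in> borel_measurable N" "v \<in> borel_measurable N"
  shows "Measurable.pred N (\<lambda>\<omega>. u \<omega> = v \<omega>)"
  by (rule pred_def[THEN iffD2, OF measurable_equality_set[OF assms]])


definition sat :: "('i \<Rightarrow> 'a) \<Rightarrow> 'i set \<Rightarrow> 'i set \<Rightarrow> bool" where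
  "sat x A I \<longleftrightarrow> (\<forall>i\<in>A. x i \<in> x ` I \<longrightarrow> i \<in> I)"

lemma sat_bij:
  "bij_betw (\<lambda>I. x ` I) {I\<in>Pow A. sat x A I} (Pow (x ` A))"
proof -
  have "inj_on (\<lambda>I. x ` I) {I\<in>Pow A. sat x A I}"
  proof (rule inj_onI)
    fix I J assume I: "I \<in> {I\<in>Pow A. sat x A I}" and J: "J \<in> {I\<in>Pow A. sat x A I}" and e: "x ` I = x ` J"
    have sub: "I' \<subseteq> J'" if I': "I' \<in> {I\<in>Pow A. sat x A I}" and J': "J' \<in> {I\<in>Pow A. sat x A I}" and e': "x ` I' = x ` J'" for I' J'
    proof
      fix i assume i: "i \<in> I'"
      have "x i \<in> x ` J'" using e' i by blast
      moreover have "i \<in> A" using I' i by auto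
      ultimately show "i \<in> J'" using J' unfolding sat_def by blast
    qed
    show "I = J" using sub[OF I J e] sub[OF J I e[symmetric]] by blast
  qed
  moreover have "(\<lambda>I. x ` I) ` {I\<in>Pow A. sat x A I} = Pow (x ` A)"
  proof
    show "(\<lambda>I. x ` I) ` {I\<in>Pow A. sat x A I} \<subseteq> Pow (x ` A)" by auto
    show "Pow (x ` A) \<subseteq> (\<lambda>I. x ` I) ` {I\<in>Pow A. sat x A I}"
    proof
      fix S assume S: "S \<in> Pow (x ` A)"
      have "S = x ` {i\<in>A. x i \<in> S}" using S by auto
      moreover have "{i\<in>A. x i \<in> S} \<in> {I\<in>Pow A. sat x A I}" by (auto simp: sat_def)
      ultimately show "S \<in> (\<lambda>I. x ` I) ` {I\<in>Pow A. sat x A I}" by blast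
    qed
  qed
  ultimately show ?thesis by (simp add: bij_betw_def)
qed

lemma sum_pow_img:
  fixes h :: "'a set \<Rightarrow> 'b::comm_monoid_add"
  assumes A: "finite A"
  shows "(\<Sum>S\<in>Pow (x ` A). h S) = (\<Sum>I\<in>Pow A. if sat x A I then h (x ` I) else 0)"
proof -
  have "(\<Sum>S\<in>Pow (x ` A). h S) = (\<Sum>I\<in>{I\<in>Pow A. sat x A I}. h (x ` I))"
    by (rule sum.reindex_bij_betw[OF sat_bij, symmetric])
  also have "\<dots> = (\<Sum>I\<in>Pow A. if sat x A I then h (x ` I) else 0)"
    using sum.inter_filter[of "Pow A" "\<lambda>I. h (x ` I)" "sat x A"] A by simp
  finally show ?thesis .
qed

lemma sat_image_diff:
  assumes "sat x A I" "I \<subseteq> A"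
  shows "x ` A - x ` I = x ` (A - I)"
  using assms unfolding sat_def by auto

lemma sum_img_first:
  fixes h :: "'a \<Rightarrow> 'b::comm_monoid_add" and x :: "nat \<Rightarrow> 'a"
  assumes A: "finite A"
  shows "(\<Sum>v\<in>x ` A. h v) = (\<Sum>i\<in>A. if (\<forall>j\<in>A. j < i \<longrightarrow> x j \<noteq> x i) then h (x i) else 0)"
proof -
  define F where "F = {i\<in>A. \<forall>j\<in>A. j < i \<longrightarrow> x j \<noteq> x i}"
  have inj: "inj_on x F"
  proof (rule inj_onI)
    fix i j assume i: "i \<in> F" and j: "j \<in> F" and e: "x i = x j"
    show "i = j"
    proof (rule ccontr)
      assume "i \<noteq> j"
      then have "i < j \<or> j < i" by arith
      then show False using i j e unfolding F_def by force
    qed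
  qed
  have img: "x ` F = x ` A"
  proof
    show "x ` F \<subseteq> x ` A" unfolding F_def by blast
    show "x ` A \<subseteq> x ` F"
    proof
      fix v assume "v \<in> x ` A"
      then obtain i where i: "i \<in> A" "x i = v" by blast
      define B where "B = {j\<in>A. x j = v}"
      have B: "finite B" "B \<noteq> {}" using A i unfolding B_def by auto
      define m where "m = Min B"
      have mB: "m \<in> B" unfolding m_def using B by (rule Min_in)
      have mle: "\<And>j. j \<in> B \<Longrightarrow> m \<le> j" unfolding m_def using B by simp
      have "m \<in> F"
        unfolding F_def using mB mle unfolding B_def by force
      then show "v \<in> x ` F" using mB unfolding B_def by force
    qed
  qed
  have "(\<Sum>v\<in>x ` A. h v) = (\<Sum>i\<in>F. h (x i))"
    using sum.reindex[OF inj, of h] img by simp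
  also have "\<dots> = (\<Sum>i\<in>A. if (\<forall>j\<in>A. j < i \<longrightarrow> x j \<noteq> x i) then h (x i) else 0)"
    unfolding F_def by (rule sum.inter_filter[OF A])
  finally show ?thesis .
qed

lemma pred_mem_img:
  fixes u :: "nat \<Rightarrow> 'n \<Rightarrow> 'a::euclidean_space"
  assumes I: "finite I" and u: "\<And>i. i \<in> I \<Longrightarrow> u i \<in> borel_measurable N" and v: "v \<in> borel_measurable N"
  shows "Measurable.pred N (\<lambda>\<omega>. v \<omega> \<in> (\<lambda>i. u i \<omega>) ` I)"
proof -
  have "Measurable.pred N (\<lambda>\<omega>. \<exists>j\<in>I. v \<omega> = u j \<omega>)"
    using I by (intro pred_intros_finite pred_eq_pts v u) auto
  moreover have "(\<lambda>\<omega>. v \<omega> \<in> (\<lambda>i. u i \<omega>) ` I) = (\<lambda>\<omega>. \<exists>j\<in>I. v \<omega> = u j \<omega>)" by auto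
  ultimately show ?thesis by simp
qed

lemma pred_sat:
  fixes u :: "nat \<Rightarrow> 'n \<Rightarrow> 'a::euclidean_space"
  assumes A: "finite A" and I: "I \<subseteq> A" and u: "\<And>i. i \<in> A \<Longrightarrow> u i \<in> borel_measurable N"
  shows "Measurable.pred N (\<lambda>\<omega>. sat (\<lambda>i. u i \<omega>) A I)"
proof -
  have fI: "finite I" using A I finite_subset by blast
  have "Measurable.pred N (\<lambda>\<omega>. u i \<omega> \<in> (\<lambda>i. u i \<omega>) ` I \<longrightarrow> i \<in> I)" if i: "i \<in> A" for i
  proof (cases "i \<in> I")
    case True then show ?thesis by simp
  next
    case False
    have "Measurable.pred N (\<lambda>\<omega>. u i \<omega> \<in> (\<lambda>i. u i \<omega>) ` I)"
      using I i by (intro pred_mem_img[OF fI] u) auto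
    from pred_intros_logic(2)[OF this] False show ?thesis by simp
  qed
  then have "Measurable.pred N (\<lambda>\<omega>. \<forall>i\<in>A. u i \<omega> \<in> (\<lambda>i. u i \<omega>) ` I \<longrightarrow> i \<in> I)"
    using A by (intro pred_intros_finite) auto
  then show ?thesis unfolding sat_def by (simp add: image_image)
qed

lemma PP:
  fixes u :: "nat \<Rightarrow> 'n \<Rightarrow> 'a::euclidean_space"
    and \<Psi> :: "'n \<Rightarrow> 'a set \<Rightarrow> 'b::{second_countable_topology, topological_comm_monoid_add}"
  assumes A: "finite A" and u: "\<And>i. i \<in> A \<Longrightarrow> u i \<in> borel_measurable N"
    and \<Psi>': "\<And>I. I \<subseteq> A \<Longrightarrow> \<Psi>' I \<in> borel_measurable N"
    and eq: "\<And>\<omega> I. \<omega> \<in> space N \<Longrightarrow> I \<subseteq> A \<Longrightarrow> sat (\<lambda>i. u i \<omega>) A I \<Longrightarrow> \<Psi> \<omega> ((\<lambda>i. u i \<omega>) ` I) = \<Psi>' I \<omega>"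
  shows "(\<lambda>\<omega>. \<Sum>S\<in>Pow ((\<lambda>i. u i \<omega>) ` A). \<Psi> \<omega> S) \<in> borel_measurable N"
proof -
  have m: "(\<lambda>\<omega>. \<Sum>I\<in>Pow A. if sat (\<lambda>i. u i \<omega>) A I then \<Psi>' I \<omega> else 0) \<in> borel_measurable N"
  proof (rule borel_measurable_sum)
    fix I assume I: "I \<in> Pow A"
    have p: "{\<omega>\<in>space N. sat (\<lambda>i. u i \<omega>) A I} \<in> sets N"
      using pred_sat[OF A _ u, of I] I unfolding pred_def by auto
    show "(\<lambda>\<omega>. if sat (\<lambda>i. u i \<omega>) A I then \<Psi>' I \<omega> else 0) \<in> borel_measurable N"
      using I by (intro measurable_If[OF _ _ p] \<Psi>') auto
  qed
  have e: "(\<Sum>S\<in>Pow ((\<lambda>i. u i \<omega>) ` A). \<Psi> \<omega> S) = (\<Sum>I\<in>Pow A. if sat (\<lambda>i. u i \<omega>) A I then \<Psi>' I \<omega> else 0)"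
    if w: "\<omega> \<in> space N" for \<omega>
  proof -
    have "(\<Sum>S\<in>Pow ((\<lambda>i. u i \<omega>) ` A). \<Psi> \<omega> S) = (\<Sum>I\<in>Pow A. if sat (\<lambda>i. u i \<omega>) A I then \<Psi> \<omega> ((\<lambda>i. u i \<omega>) ` I) else 0)"
      by (rule sum_pow_img[OF A])
    also have "\<dots> = (\<Sum>I\<in>Pow A. if sat (\<lambda>i. u i \<omega>) A I then \<Psi>' I \<omega> else 0)"
      by (rule sum.cong[OF refl]) (simp add: eq[OF w])
    finally show ?thesis .
  qed
  show ?thesis using m by (rule measurable_cong[THEN iffD1, rotated]) (simp add: e)
qed

lemma PS:
  fixes u :: "nat \<Rightarrow> 'n \<Rightarrow> 'a::euclidean_space"
    and \<Psi> :: "'n \<Rightarrow> 'a \<Rightarrow> 'b::{second_countable_topology, topological_comm_monoid_add}"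
  assumes A: "finite A" and u: "\<And>i. i \<in> A \<Longrightarrow> u i \<in> borel_measurable N"
    and \<Psi>': "\<And>i. i \<in> A \<Longrightarrow> \<Psi>' i \<in> borel_measurable N"
    and eq: "\<And>\<omega> i. \<omega> \<in> space N \<Longrightarrow> i \<in> A \<Longrightarrow> \<Psi> \<omega> (u i \<omega>) = \<Psi>' i \<omega>"
  shows "(\<lambda>\<omega>. \<Sum>v\<in>(\<lambda>i. u i \<omega>) ` A. \<Psi> \<omega> v) \<in> borel_measurable N"
proof -
  have m: "(\<lambda>\<omega>. \<Sum>i\<in>A. if (\<forall>j\<in>A. j < i \<longrightarrow> u j \<omega> \<noteq> u i \<omega>) then \<Psi>' i \<omega> else 0) \<in> borel_measurable N"
  proof (rule borel_measurable_sum)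
    fix i assume i: "i \<in> A"
    have pj: "{\<omega>\<in>space N. j \<in> A \<and> j < i \<longrightarrow> u j \<omega> \<noteq> u i \<omega>} \<in> sets N" for j
    proof (cases "j \<in> A \<and> j < i")
      case True
      have uj: "u j \<in> borel_measurable N" using True u by blast
      have "{\<omega>\<in>space N. u j \<omega> = u i \<omega>} \<in> sets N"
        using measurable_equality_set[OF uj u[OF i]] .
      then have "{\<omega>\<in>space N. \<not> u j \<omega> = u i \<omega>} \<in> sets N" by (rule sets.sets_Collect_neg)
      moreover have "{\<omega>\<in>space N. j \<in> A \<and> j < i \<longrightarrow> u j \<omega> \<noteq> u i \<omega>} = {\<omega>\<in>space N. \<not> u j \<omega> = u i \<omega>}"
        using True by blast
      ultimately show ?thesis by (simp only:)
    next
      case False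
      then have "{\<omega>\<in>space N. j \<in> A \<and> j < i \<longrightarrow> u j \<omega> \<noteq> u i \<omega>} = space N" by blast
      then show ?thesis by (simp only: sets.top)
    qed
    have "{\<omega>\<in>space N. \<forall>j\<in>A. j < i \<longrightarrow> u j \<omega> \<noteq> u i \<omega>} = {\<omega>\<in>space N. \<forall>j\<in>A. j \<in> A \<and> j < i \<longrightarrow> u j \<omega> \<noteq> u i \<omega>}"
      by blast
    also have "\<dots> \<in> sets N" by (rule sets.sets_Collect_countable_Ball[OF pj])
    finally have p: "{\<omega>\<in>space N. \<forall>j\<in>A. j < i \<longrightarrow> u j \<omega> \<noteq> u i \<omega>} \<in> sets N" .
    show "(\<lambda>\<omega>. if (\<forall>j\<in>A. j < i \<longrightarrow> u j \<omega> \<noteq> u i \<omega>) then \<Psi>' i \<omega> else 0) \<in> borel_measurable N"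
      by (intro measurable_If[OF _ _ p] \<Psi>'[OF i]) auto
  qed
  have e: "(\<Sum>v\<in>(\<lambda>i. u i \<omega>) ` A. \<Psi> \<omega> v) = (\<Sum>i\<in>A. if (\<forall>j\<in>A. j < i \<longrightarrow> u j \<omega> \<noteq> u i \<omega>) then \<Psi>' i \<omega> else 0)"
    if w: "\<omega> \<in> space N" for \<omega>
  proof -
    have "(\<Sum>v\<in>(\<lambda>i. u i \<omega>) ` A. \<Psi> \<omega> v) = (\<Sum>i\<in>A. if (\<forall>j\<in>A. j < i \<longrightarrow> u j \<omega> \<noteq> u i \<omega>) then \<Psi> \<omega> (u i \<omega>) else 0)"
      by (rule sum_img_first[OF A])
    also have "\<dots> = (\<Sum>i\<in>A. if (\<forall>j\<in>A. j < i \<longrightarrow> u j \<omega> \<noteq> u i \<omega>) then \<Psi>' i \<omega> else 0)"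
      by (rule sum.cong[OF refl]) (auto simp: eq[OF w])
    finally show ?thesis .
  qed
  show ?thesis using m by (rule measurable_cong[THEN iffD1, rotated]) (simp add: e)
qed

lemma card_meas:
  fixes u :: "nat \<Rightarrow> 'n \<Rightarrow> 'a::euclidean_space"
  assumes A: "finite A" and u: "\<And>i. i \<in> A \<Longrightarrow> u i \<in> borel_measurable N"
  shows "(\<lambda>\<omega>. real (card ((\<lambda>i. u i \<omega>) ` A))) \<in> borel_measurable N"
proof -
  have "(\<lambda>\<omega>. \<Sum>v\<in>(\<lambda>i. u i \<omega>) ` A. (1::real)) \<in> borel_measurable N"
    by (rule PS[OF A u, where \<Psi>'="\<lambda>_ _. 1"]) auto
  then show ?thesis by simp
qed


lemma psf: "product_sigma_finite (\<lambda>_::nat. lborel::'a::euclidean_space measure)"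
  unfolding product_sigma_finite_def by (auto intro: lborel.sigma_finite_measure_axioms)

lemma proj_meas: "i \<in> I \<Longrightarrow> (\<lambda>y. y i) \<in> borel_measurable (PiM I (\<lambda>_. (lborel::'a::euclidean_space measure)))"
  using measurable_component_singleton[of i I "\<lambda>_. (lborel::'a measure)"] by simp

lemma cfg_Suc_upd: "cfg (Suc k) (y(k := t)) = insert t (cfg k y)"
proof -
  have a: "(y(k := t)) ` {..<k} = y ` {..<k}" by auto
  have "(y(k := t)) ` {..<Suc k} = insert t ((y(k:=t)) ` {..<k})" by (simp only: lessThan_Suc image_insert fun_upd_same)
  then show ?thesis unfolding cfg_def a .
qed

lemma cfg_0[simp]: "cfg 0 x = {}" by (simp add: cfg_def)

lemma cfg_ne: "n > 0 \<Longrightarrow> cfg n x \<noteq> {}" by (auto simp: cfg_def)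

lemma smeas_insert_joint:
  fixes g :: "'a::euclidean_space set \<Rightarrow> 'b::topological_space"
  assumes g: "smeas g"
  shows "(\<lambda>(x, t). g (insert t (cfg n x))) \<in> borel_measurable ((MM n :: (nat \<Rightarrow> 'a) measure) \<Otimes>\<^sub>M lborel)"
proof -
  define u where "u = (\<lambda>i (p :: (nat \<Rightarrow> 'a) \<times> 'a). if i < n then fst p i else snd p)"
  have u: "u i \<in> borel_measurable ((MM n :: (nat \<Rightarrow> 'a) measure) \<Otimes>\<^sub>M lborel)" if "i \<in> {..<Suc n}" for i
  proof (cases "i < n")
    case True
    have "(\<lambda>p. fst p i) \<in> borel_measurable ((MM n :: (nat \<Rightarrow> 'a) measure) \<Otimes>\<^sub>M lborel)"
      using measurable_compose[OF measurable_fst proj_meas[of i "{..<n}"]] True by (simp add: comp_def)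
    then show ?thesis using True unfolding u_def by simp
  next
    case False
    then show ?thesis unfolding u_def by simp
  qed
  have "(\<lambda>p. g ((\<lambda>i. u i p) ` {..<Suc n})) \<in> borel_measurable ((MM n :: (nat \<Rightarrow> 'a) measure) \<Otimes>\<^sub>M lborel)"
    by (rule S1[OF g _ u]) auto
  moreover have "(\<lambda>i. u i p) ` {..<Suc n} = insert (snd p) (cfg n (fst p))" for p
    unfolding u_def cfg_def by (auto simp: lessThan_Suc)
  ultimately show ?thesis by (simp add: case_prod_beta)
qed

lemma smeas_int_insert:
  fixes g :: "'a::euclidean_space set \<Rightarrow> ennreal"
  assumes g: "smeas g"
  shows "smeas (\<lambda>\<xi>. \<integral>\<^sup>+t. g (insert t \<xi>) \<partial>lborel)"
  unfolding smeas_def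
proof
  fix n
  show "(\<lambda>x. \<integral>\<^sup>+t. g (insert t (cfg n x)) \<partial>lborel) \<in> borel_measurable (MM n :: (nat \<Rightarrow> 'a) measure)"
    using lborel.borel_measurable_nn_integral[OF smeas_insert_joint[OF g, of n]] by simp
qed

lemma RI:
  fixes g :: "'a::euclidean_space set \<Rightarrow> ennreal"
  assumes "finite (J :: nat set)" "card J = k" "smeas g"
  shows "(\<integral>\<^sup>+y. g (y ` J) \<partial>PiM J (\<lambda>_. lborel)) = (\<integral>\<^sup>+y. g (cfg k y) \<partial>(MM k :: (nat \<Rightarrow> 'a) measure))"
  using assms
proof (induction k arbitrary: J g)
  case 0
  then have "J = {}" by simp
  then show ?case by (simp add: cfg_def)
next
  case (Suc k)
  interpret product_sigma_finite "\<lambda>_::nat. lborel::'a measure" by (rule psf)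
  have "J \<noteq> {}" using Suc.prems(2) by auto
  then obtain j where j: "j \<in> J" by blast
  define J' where "J' = J - {j}"
  have J: "J = insert j J'" "j \<notin> J'" "finite J'" "card J' = k" using j Suc.prems unfolding J'_def by auto
  have mg: "(\<lambda>y. g (y ` J)) \<in> borel_measurable (PiM (insert j J') (\<lambda>_. lborel::'a measure))"
    using S1[OF Suc.prems(3) Suc.prems(1), of "\<lambda>i y. y i"] proj_meas[of _ "insert j J'"] J(1) by auto
  have "(\<integral>\<^sup>+y. g (y ` J) \<partial>PiM J (\<lambda>_. lborel)) = (\<integral>\<^sup>+y. g (y ` J) \<partial>PiM (insert j J') (\<lambda>_. lborel))"
    using J(1) by simp
  also have "\<dots> = (\<integral>\<^sup>+y. (\<integral>\<^sup>+t. g ((y(j := t)) ` J) \<partial>lborel) \<partial>PiM J' (\<lambda>_. lborel))"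
    by (rule product_nn_integral_insert[OF J(3) J(2) mg])
  also have "\<dots> = (\<integral>\<^sup>+y. (\<lambda>\<xi>. \<integral>\<^sup>+t. g (insert t \<xi>) \<partial>lborel) (y ` J') \<partial>PiM J' (\<lambda>_. lborel))"
  proof -
    have e: "(y(j := t)) ` J = insert t (y ` J')" for y t using J(1,2) by auto
    show ?thesis by (simp only: e)
  qed
  also have "\<dots> = (\<integral>\<^sup>+y. (\<lambda>\<xi>. \<integral>\<^sup>+t. g (insert t \<xi>) \<partial>lborel) (cfg k y) \<partial>(MM k :: (nat \<Rightarrow> 'a) measure))"
    by (rule Suc.IH[OF J(3) J(4) smeas_int_insert[OF Suc.prems(3)]])
  also have "\<dots> = (\<integral>\<^sup>+y. (\<integral>\<^sup>+t. g (cfg (Suc k) (y(k := t))) \<partial>lborel) \<partial>(MM k :: (nat \<Rightarrow> 'a) measure))"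
    by (simp add: cfg_Suc_upd)
  also have "\<dots> = (\<integral>\<^sup>+w. g (cfg (Suc k) w) \<partial>PiM (insert k {..<k}) (\<lambda>_. lborel::'a measure))"
  proof (rule product_nn_integral_insert[symmetric])
    show "(\<lambda>w. g (cfg (Suc k) w)) \<in> borel_measurable (PiM (insert k {..<k}) (\<lambda>_. lborel::'a measure))"
      using Suc.prems(3) unfolding smeas_def by (simp add: lessThan_Suc[symmetric])
  qed auto
  also have "\<dots> = (\<integral>\<^sup>+w. g (cfg (Suc k) w) \<partial>(MM (Suc k) :: (nat \<Rightarrow> 'a) measure))"
    by (simp add: lessThan_Suc)
  finally show ?case .
qed


lemma sf_MM: "sigma_finite_measure (MM m :: (nat \<Rightarrow> 'a::euclidean_space) measure)"
  by (rule product_sigma_finite.sigma_finite[OF psf]) auto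

lemma LP_mono:
  assumes "\<And>\<eta>. finite \<eta> \<Longrightarrow> f \<eta> \<le> g \<eta>"
  shows "LP_nn f \<le> LP_nn g"
  unfolding LP_nn_def
proof (rule suminf_le)
  fix n
  show "ennreal (1 / fact n) * (\<integral>\<^sup>+ x. f (cfg n x) \<partial>MM n) \<le> ennreal (1 / fact n) * (\<integral>\<^sup>+ x. g (cfg n x) \<partial>MM n)"
    by (intro mult_left_mono nn_integral_mono assms finite_cfg) simp
qed (rule summableI)+

lemma LP_cong:
  assumes "\<And>\<eta>. finite \<eta> \<Longrightarrow> f \<eta> = g \<eta>"
  shows "LP_nn f = LP_nn g"
  using LP_mono[of f g] LP_mono[of g f] assms by (simp add: antisym)

lemma LP_cmult:
  fixes f :: "'a::euclidean_space set \<Rightarrow> ennreal"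
  assumes f: "smeas f"
  shows "LP_nn (\<lambda>\<eta>. c * f \<eta>) = c * LP_nn f"
proof -
  have "ennreal (1 / fact n) * (\<integral>\<^sup>+ x. c * f (cfg n x) \<partial>(MM n :: (nat \<Rightarrow> 'a) measure)) = c * (ennreal (1 / fact n) * (\<integral>\<^sup>+ x. f (cfg n x) \<partial>MM n))" for n
    using f unfolding smeas_def by (simp add: nn_integral_cmult mult.left_commute)
  then show ?thesis unfolding LP_nn_def by simp
qed

lemma smeas_add: "smeas f \<Longrightarrow> smeas g \<Longrightarrow> smeas (\<lambda>\<eta>. f \<eta> + (g \<eta> :: ennreal))"
  unfolding smeas_def by (intro allI borel_measurable_add) auto

lemma smeas_sum: "(\<And>i. i \<in> S \<Longrightarrow> smeas (f i)) \<Longrightarrow> smeas (\<lambda>\<eta>. \<Sum>i\<in>S. (f i \<eta> :: ennreal))"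
  unfolding smeas_def by (intro allI borel_measurable_sum) auto

lemma LP_add:
  fixes f g :: "'a::euclidean_space set \<Rightarrow> ennreal"
  assumes f: "smeas f" and g: "smeas g"
  shows "LP_nn (\<lambda>\<eta>. f \<eta> + g \<eta>) = LP_nn f + LP_nn g"
proof -
  have "ennreal (1 / fact n) * (\<integral>\<^sup>+ x. f (cfg n x) + g (cfg n x) \<partial>(MM n :: (nat \<Rightarrow> 'a) measure))
     = ennreal (1 / fact n) * (\<integral>\<^sup>+ x. f (cfg n x) \<partial>MM n) + ennreal (1 / fact n) * (\<integral>\<^sup>+ x. g (cfg n x) \<partial>MM n)" for n
    using f g unfolding smeas_def by (simp add: nn_integral_add distrib_left)
  then show ?thesis unfolding LP_nn_def by (simp add: suminf_add[OF summableI summableI])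
qed

lemma LP_sum:
  fixes f :: "'i \<Rightarrow> 'a::euclidean_space set \<Rightarrow> ennreal"
  assumes "finite S" "\<And>i. i \<in> S \<Longrightarrow> smeas (f i)"
  shows "LP_nn (\<lambda>\<eta>. \<Sum>i\<in>S. f i \<eta>) = (\<Sum>i\<in>S. LP_nn (f i))"
  using assms
proof (induction S rule: finite_induct)
  case empty
  then show ?case by (simp add: LP_nn_def)
next
  case (insert x F)
  have "LP_nn (\<lambda>\<eta>. \<Sum>i\<in>insert x F. f i \<eta>) = LP_nn (\<lambda>\<eta>. f x \<eta> + (\<Sum>i\<in>F. f i \<eta>))"
    using insert by simp
  also have "\<dots> = LP_nn (f x) + LP_nn (\<lambda>\<eta>. \<Sum>i\<in>F. f i \<eta>)"
    using insert by (intro LP_add smeas_sum) auto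
  finally show ?case using insert by simp
qed

lemma emeasure_PiM_empty_space: "emeasure (PiM {} M) (space (PiM {} M)) = 1"
  by (simp add: PiM_empty)

lemma LP_head:
  fixes f :: "'a::euclidean_space set \<Rightarrow> ennreal"
  shows "LP_nn f = f {} + LP_nn (\<lambda>\<eta>. if \<eta> = {} then 0 else f \<eta>)"
proof -
  define a where "a n = ennreal (1 / fact n) * (\<integral>\<^sup>+ x. f (cfg n x) \<partial>(MM n :: (nat \<Rightarrow> 'a) measure))" for n
  define b where "b n = ennreal (1 / fact n) * (\<integral>\<^sup>+ x. (if cfg n x = {} then 0 else f (cfg n x)) \<partial>(MM n :: (nat \<Rightarrow> 'a) measure))" for n
  have ab: "a n = b n + (if n = 0 then f {} else 0)" for n
  proof (cases n)
    case 0
    then show ?thesis unfolding a_def b_def by (simp add: emeasure_PiM_empty_space)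
  next
    case (Suc m)
    then have ne: "cfg n x \<noteq> {}" for x using cfg_ne by auto
    show ?thesis unfolding a_def b_def using Suc by (simp add: cfg_ne)
  qed
  have s1: "(\<lambda>n. if n = 0 then f {} else 0) sums f {}"
    using sums_single[of 0 "\<lambda>_. f {}"] by simp
  have "LP_nn f = (\<Sum>n. a n)" unfolding LP_nn_def a_def ..
  also have "\<dots> = (\<Sum>n. b n) + (\<Sum>n. (if n = 0 then f {} else 0))"
    unfolding ab by (rule suminf_add[OF summableI summableI, symmetric])
  also have "(\<Sum>n. (if n = 0 then f {} else 0)) = f {}" using sums_unique[OF s1] by simp
  also have "(\<Sum>n. b n) = LP_nn (\<lambda>\<eta>. if \<eta> = {} then 0 else f \<eta>)" unfolding LP_nn_def b_def ..
  finally show ?thesis by (simp add: add.commute)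
qed

lemma null_diag:
  assumes ij: "i < n" "j < n" "i \<noteq> j"
  shows "AE w in (MM n :: (nat \<Rightarrow> 'a::euclidean_space) measure). w i \<noteq> w j"
proof -
  interpret product_sigma_finite "\<lambda>_::nat. lborel::'a measure" by (rule psf)
  define I where "I = {..<n} - {i}"
  have I: "finite I" "i \<notin> I" "insert i I = {..<n}" "j \<in> I" using ij unfolding I_def by auto
  define S where "S = {w \<in> space (MM n :: (nat \<Rightarrow> 'a) measure). w i = w j}"
  have S: "S \<in> sets (MM n :: (nat \<Rightarrow> 'a) measure)"
    unfolding S_def by (rule measurable_equality_set) (use proj_meas ij in auto)
  have mS: "indicator S \<in> borel_measurable (PiM (insert i I) (\<lambda>_. lborel::'a measure))"
    using S I(3) by simp
  have "emeasure (MM n :: (nat \<Rightarrow> 'a) measure) S = (\<integral>\<^sup>+w. indicator S w \<partial>PiM (insert i I) (\<lambda>_. lborel::'a measure))"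
    using S I(3) by simp
  also have "\<dots> = (\<integral>\<^sup>+w. (\<integral>\<^sup>+t. indicator S (w(i := t)) \<partial>lborel) \<partial>PiM I (\<lambda>_. lborel))"
    by (rule product_nn_integral_insert[OF I(1) I(2) mS])
  also have "\<dots> = (\<integral>\<^sup>+w. 0 \<partial>PiM I (\<lambda>_. lborel::'a measure))"
  proof (rule nn_integral_cong)
    fix w assume w: "w \<in> space (PiM I (\<lambda>_. lborel::'a measure))"
    have "(\<integral>\<^sup>+t. indicator S (w(i := t)) \<partial>lborel) \<le> (\<integral>\<^sup>+t. indicator {w j} t \<partial>lborel)"
    proof (rule nn_integral_mono)
      fix t show "indicator S (w(i := t)) \<le> (indicator {w j} t :: ennreal)"
        using I(2,4) ij(3) unfolding S_def by (auto simp: indicator_def)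
    qed
    also have "\<dots> = 0" by simp
    finally show "(\<integral>\<^sup>+t. indicator S (w(i := t)) \<partial>lborel) = 0" by simp
  qed
  also have "\<dots> = 0" by simp
  finally have "emeasure (MM n :: (nat \<Rightarrow> 'a) measure) S = 0" .
  then show ?thesis
    using S by (intro AE_I[where N=S]) (auto simp: S_def)
qed

lemma AE_inj:
  "AE w in (MM n :: (nat \<Rightarrow> 'a::euclidean_space) measure). inj_on w {..<n}"
proof -
  have "AE w in (MM n :: (nat \<Rightarrow> 'a) measure). \<forall>i\<in>{..<n}. \<forall>j\<in>{..<n}. i \<noteq> j \<longrightarrow> w i \<noteq> w j"
    by (intro AE_finite_allI) (use null_diag in auto)
  then show ?thesis by eventually_elim (auto simp: inj_on_def)
qed


lemma smeasP_insert_joint: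
  fixes H :: "'a::euclidean_space set \<Rightarrow> 'a \<Rightarrow> 'b::topological_space"
  assumes g: "smeasP H"
  shows "(\<lambda>(x, t). H (insert t (cfg n x)) t) \<in> borel_measurable ((MM n :: (nat \<Rightarrow> 'a) measure) \<Otimes>\<^sub>M lborel)"
proof -
  define u where "u = (\<lambda>i (p :: (nat \<Rightarrow> 'a) \<times> 'a). if i < n then fst p i else snd p)"
  have u: "u i \<in> borel_measurable ((MM n :: (nat \<Rightarrow> 'a) measure) \<Otimes>\<^sub>M lborel)" if "i \<in> {..<Suc n}" for i
  proof (cases "i < n")
    case True
    have "(\<lambda>p. fst p i) \<in> borel_measurable ((MM n :: (nat \<Rightarrow> 'a) measure) \<Otimes>\<^sub>M lborel)"
      using measurable_compose[OF measurable_fst proj_meas[of i "{..<n}"]] True by (simp add: comp_def)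
    then show ?thesis using True unfolding u_def by simp
  next
    case False
    then show ?thesis unfolding u_def by simp
  qed
  have "(\<lambda>p. H ((\<lambda>i. u i p) ` {..<Suc n}) (snd p)) \<in> borel_measurable ((MM n :: (nat \<Rightarrow> 'a) measure) \<Otimes>\<^sub>M lborel)"
    by (rule SP1[OF g _ u]) auto
  moreover have "(\<lambda>i. u i p) ` {..<Suc n} = insert (snd p) (cfg n (fst p))" for p
    unfolding u_def cfg_def by (auto simp: lessThan_Suc)
  ultimately show ?thesis by (simp add: case_prod_beta)
qed

lemma smeas_mecke_g:
  fixes H :: "'a::euclidean_space set \<Rightarrow> 'a \<Rightarrow> ennreal"
  assumes g: "smeasP H"
  shows "smeas (\<lambda>\<xi>. \<integral>\<^sup>+t. H (insert t \<xi>) t \<partial>lborel)"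
  unfolding smeas_def
proof
  fix n
  show "(\<lambda>x. \<integral>\<^sup>+t. H (insert t (cfg n x)) t \<partial>lborel) \<in> borel_measurable (MM n :: (nat \<Rightarrow> 'a) measure)"
    using lborel.borel_measurable_nn_integral[OF smeasP_insert_joint[OF g, of n]] by simp
qed

lemma smeasP_at:
  fixes H :: "'a::euclidean_space set \<Rightarrow> 'a \<Rightarrow> 'b::topological_space"
  assumes g: "smeasP H" and i: "i < n"
  shows "(\<lambda>w. H (cfg n w) (w i)) \<in> borel_measurable (MM n :: (nat \<Rightarrow> 'a) measure)"
proof -
  have "(\<lambda>w. H ((\<lambda>j. w j) ` {..<n}) (w i)) \<in> borel_measurable (MM n :: (nat \<Rightarrow> 'a) measure)"
    by (rule SP1[OF g]) (use proj_meas i in auto)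
  then show ?thesis by (simp add: cfg_def)
qed

lemma mecke_term:
  fixes H :: "'a::euclidean_space set \<Rightarrow> 'a \<Rightarrow> ennreal"
  assumes g: "smeasP H" and i: "i < Suc k"
  shows "(\<integral>\<^sup>+w. H (cfg (Suc k) w) (w i) \<partial>(MM (Suc k) :: (nat \<Rightarrow> 'a) measure))
       = (\<integral>\<^sup>+y. (\<integral>\<^sup>+t. H (insert t (cfg k y)) t \<partial>lborel) \<partial>(MM k :: (nat \<Rightarrow> 'a) measure))"
proof -
  interpret product_sigma_finite "\<lambda>_::nat. lborel::'a measure" by (rule psf)
  define I where "I = {..<Suc k} - {i}"
  have I: "finite I" "i \<notin> I" "insert i I = {..<Suc k}" "card I = k" using i unfolding I_def by auto
  have m: "(\<lambda>w. H (cfg (Suc k) w) (w i)) \<in> borel_measurable (PiM (insert i I) (\<lambda>_. lborel::'a measure))"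
    using smeasP_at[OF g i] I(3) by simp
  have "(\<integral>\<^sup>+w. H (cfg (Suc k) w) (w i) \<partial>(MM (Suc k) :: (nat \<Rightarrow> 'a) measure))
      = (\<integral>\<^sup>+w. H (cfg (Suc k) w) (w i) \<partial>(PiM (insert i I) (\<lambda>_. lborel::'a measure)))"
    using I(3) by simp
  also have "\<dots> = (\<integral>\<^sup>+w. (\<integral>\<^sup>+t. H (cfg (Suc k) (w(i := t))) ((w(i := t)) i) \<partial>lborel) \<partial>PiM I (\<lambda>_. lborel))"
    by (rule product_nn_integral_insert[OF I(1) I(2) m])
  also have "\<dots> = (\<integral>\<^sup>+w. (\<lambda>\<xi>. \<integral>\<^sup>+t. H (insert t \<xi>) t \<partial>lborel) (w ` I) \<partial>PiM I (\<lambda>_. lborel))"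
  proof -
    have e: "cfg (Suc k) (w(i := t)) = insert t (w ` I)" for w t
    proof -
      have a: "(w(i := t)) ` I = w ` I" using I(2) by auto
      have "cfg (Suc k) (w(i := t)) = (w(i := t)) ` insert i I" unfolding cfg_def I(3) ..
      also have "\<dots> = insert t (w ` I)" by (simp only: image_insert fun_upd_same a)
      finally show ?thesis .
    qed
    show ?thesis by (simp add: e)
  qed
  also have "\<dots> = (\<integral>\<^sup>+y. (\<lambda>\<xi>. \<integral>\<^sup>+t. H (insert t \<xi>) t \<partial>lborel) (cfg k y) \<partial>(MM k :: (nat \<Rightarrow> 'a) measure))"
    by (rule RI[OF I(1) I(4) smeas_mecke_g[OF g]])
  finally show ?thesis by simp
qed

lemma fact_ennreal_Suc:
  "ennreal (1 / fact (Suc k)) * (of_nat (Suc k) * V) = ennreal (1 / fact k) * V"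
proof -
  have "ennreal (1 / fact (Suc k)) * of_nat (Suc k) = ennreal (1 / fact (Suc k) * real (Suc k))"
  proof -
    have "of_nat (Suc k) = ennreal (real (Suc k))" by (rule ennreal_of_nat_eq_real_of_nat)
    then show ?thesis by (simp only: ennreal_mult[symmetric] ) (rule ennreal_mult[symmetric], auto)
  qed
  also have "1 / fact (Suc k) * real (Suc k) = 1 / fact k"
  proof -
    have nz: "(1 + real k) \<noteq> 0" "fact k \<noteq> (0::real)" by auto
    show ?thesis using nz by (simp add: fact_Suc)
  qed
  finally have X: "ennreal (1 / fact (Suc k)) * of_nat (Suc k) = ennreal (1 / fact k)" .
  show ?thesis by (metis X mult.assoc)
qed

lemma Mecke:
  fixes H :: "'a::euclidean_space set \<Rightarrow> 'a \<Rightarrow> ennreal"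
  assumes g: "smeasP H"
  shows "LP_nn (\<lambda>\<xi>. \<integral>\<^sup>+t. H (insert t \<xi>) t \<partial>lborel) \<le> LP_nn (\<lambda>\<omega>. \<Sum>t\<in>\<omega>. H \<omega> t)"
proof -
  define V where "V k = (\<integral>\<^sup>+y. (\<integral>\<^sup>+t. H (insert t (cfg k y)) t \<partial>lborel) \<partial>(MM k :: (nat \<Rightarrow> 'a) measure))" for k
  define r where "r n = ennreal (1 / fact n) * (\<integral>\<^sup>+w. (\<Sum>t\<in>cfg n w. H (cfg n w) t) \<partial>(MM n :: (nat \<Rightarrow> 'a) measure))" for n
  have rS: "r (Suc k) = ennreal (1 / fact k) * V k" for k
  proof -
    have "(\<integral>\<^sup>+w. (\<Sum>t\<in>cfg (Suc k) w. H (cfg (Suc k) w) t) \<partial>(MM (Suc k) :: (nat \<Rightarrow> 'a) measure))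
        = (\<integral>\<^sup>+w. (\<Sum>i\<in>{..<Suc k}. H (cfg (Suc k) w) (w i)) \<partial>(MM (Suc k) :: (nat \<Rightarrow> 'a) measure))"
    proof (rule nn_integral_cong_AE)
      show "AE w in (MM (Suc k) :: (nat \<Rightarrow> 'a) measure). (\<Sum>t\<in>cfg (Suc k) w. H (cfg (Suc k) w) t) = (\<Sum>i\<in>{..<Suc k}. H (cfg (Suc k) w) (w i))"
        using AE_inj[of "Suc k"] by eventually_elim (simp add: cfg_def sum.reindex)
    qed
    also have "\<dots> = (\<Sum>i\<in>{..<Suc k}. (\<integral>\<^sup>+w. H (cfg (Suc k) w) (w i) \<partial>(MM (Suc k) :: (nat \<Rightarrow> 'a) measure)))"
      by (rule nn_integral_sum) (use smeasP_at[OF g] in auto)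
    also have "\<dots> = (\<Sum>i\<in>{..<Suc k}. V k)"
      unfolding V_def by (rule sum.cong[OF refl]) (use mecke_term[OF g] in auto)
    also have "\<dots> = of_nat (Suc k) * V k" by simp
    finally show ?thesis unfolding r_def by (simp only: fact_ennreal_Suc)
  qed
  have "LP_nn (\<lambda>\<xi>. \<integral>\<^sup>+t. H (insert t \<xi>) t \<partial>lborel) = (\<Sum>k. ennreal (1 / fact k) * V k)"
    unfolding LP_nn_def V_def ..
  also have "\<dots> = (\<Sum>k. r (Suc k))" by (simp add: rS)
  also have "\<dots> \<le> (\<Sum>k. r (Suc k)) + r 0" by simp
  also have "\<dots> = (\<Sum>n. r n)"
    using sums_unique[OF sums_Suc[OF summable_sums[OF summableI[of "\<lambda>k. r (Suc k)"]]]] by simp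
  also have "\<dots> = LP_nn (\<lambda>\<omega>. \<Sum>t\<in>\<omega>. H \<omega> t)" unfolding LP_nn_def r_def ..
  finally show ?thesis .
qed


lemma DIAG:
  fixes b :: "nat \<Rightarrow> nat \<Rightarrow> ennreal"
  shows "(\<Sum>n. \<Sum>k\<le>n. b k (n - k)) \<le> (\<Sum>k. \<Sum>m. b k m)"
proof (rule suminf_le_const[OF summableI])
  fix N
  have "(\<Sum>n<N. \<Sum>k\<le>n. b k (n - k)) = (\<Sum>(k, m)\<in>{(k, m). k + m < N}. b k m)"
    by (rule sum.triangle_reindex[symmetric])
  also have "\<dots> \<le> (\<Sum>(k, m)\<in>{..<N} \<times> {..<N}. b k m)"
    by (rule sum_mono2) auto
  also have "\<dots> = (\<Sum>k<N. \<Sum>m<N. b k m)"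
    by (rule sum.cartesian_product[symmetric])
  also have "\<dots> \<le> (\<Sum>k<N. \<Sum>m. b k m)"
    by (intro sum_mono sum_le_suminf[OF summableI]) auto
  also have "\<dots> \<le> (\<Sum>k. \<Sum>m. b k m)"
    by (intro sum_le_suminf[OF summableI]) auto
  finally show "(\<Sum>n<N. \<Sum>k\<le>n. b k (n - k)) \<le> (\<Sum>k. \<Sum>m. b k m)" .
qed

lemma smeas2_fst:
  fixes F :: "'a::euclidean_space set \<Rightarrow> 'a set \<Rightarrow> 'b::topological_space"
  assumes F: "smeas2 F" and S: "finite S"
  shows "smeas (F S)"
  unfolding smeas_def
proof
  fix n
  obtain e where e: "bij_betw e {..<card S} S" using enum_finite[OF S] by blast
  define e' where "e' = (\<lambda>i\<in>{..<card S}. e i)"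
  have S': "cfg (card S) e' = S" unfolding e'_def cfg_restrict using e by (simp add: bij_betw_def)
  have sp: "e' \<in> space (MM (card S) :: (nat \<Rightarrow> 'a) measure)" unfolding e'_def by (simp add: space_PiM)
  have m: "(\<lambda>z. (e', z)) \<in> measurable (MM n :: (nat \<Rightarrow> 'a) measure) ((MM (card S) :: (nat \<Rightarrow> 'a) measure) \<Otimes>\<^sub>M MM n)"
    by (rule measurable_Pair[OF measurable_const[OF sp] measurable_ident_sets[OF refl]])
  have "(\<lambda>z. (\<lambda>(x, y). F (cfg (card S) x) (cfg n y)) (e', z)) \<in> borel_measurable (MM n :: (nat \<Rightarrow> 'a) measure)"
    by (rule measurable_compose[OF m F[unfolded smeas2_def, rule_format]])
  then show "(\<lambda>z. F S (cfg n z)) \<in> borel_measurable (MM n :: (nat \<Rightarrow> 'a) measure)" by (simp add: S')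
qed

lemma inner_meas:
  fixes F :: "'a::euclidean_space set \<Rightarrow> 'a set \<Rightarrow> ennreal"
  assumes F: "smeas2 F"
  shows "smeas (\<lambda>\<xi>. \<integral>\<^sup>+z. F \<xi> (cfg m z) \<partial>(MM m :: (nat \<Rightarrow> 'a) measure))"
  unfolding smeas_def
proof
  fix k
  show "(\<lambda>y. \<integral>\<^sup>+z. F (cfg k y) (cfg m z) \<partial>(MM m :: (nat \<Rightarrow> 'a) measure)) \<in> borel_measurable (MM k :: (nat \<Rightarrow> 'a) measure)"
    using sigma_finite_measure.borel_measurable_nn_integral[OF sf_MM F[unfolded smeas2_def, rule_format, of k m]]
    by simp
qed

lemma split_term:
  fixes F :: "'a::euclidean_space set \<Rightarrow> 'a set \<Rightarrow> ennreal"
  assumes F: "smeas2 F" and I: "I \<subseteq> {..<n}"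
  shows "(\<integral>\<^sup>+x. F (x ` I) (x ` ({..<n} - I)) \<partial>(MM n :: (nat \<Rightarrow> 'a) measure))
    = (\<integral>\<^sup>+y. (\<integral>\<^sup>+z. F (cfg (card I) y) (cfg (n - card I) z) \<partial>(MM (n - card I) :: (nat \<Rightarrow> 'a) measure)) \<partial>(MM (card I) :: (nat \<Rightarrow> 'a) measure))"
proof -
  interpret product_sigma_finite "\<lambda>_::nat. lborel::'a measure" by (rule psf)
  define J where "J = {..<n} - I"
  have IJ: "I \<inter> J = {}" "finite I" "finite J" "I \<union> J = {..<n}" "card J = n - card I"
  proof -
    have fI: "finite I" using I finite_subset by blast
    have "card J = card {..<n} - card I" unfolding J_def by (rule card_Diff_subset[OF fI I])
    then show "I \<inter> J = {}" "finite I" "finite J" "I \<union> J = {..<n}" "card J = n - card I"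
      using I fI unfolding J_def by auto
  qed
  have m: "(\<lambda>x. F (x ` I) (x ` J)) \<in> borel_measurable (PiM (I \<union> J) (\<lambda>_. lborel::'a measure))"
    using S21[OF F IJ(2) IJ(3), of "\<lambda>i x. x i"] proj_meas[of _ "I \<union> J"] by auto
  have "(\<integral>\<^sup>+x. F (x ` I) (x ` ({..<n} - I)) \<partial>(MM n :: (nat \<Rightarrow> 'a) measure))
      = (\<integral>\<^sup>+x. F (x ` I) (x ` J) \<partial>(PiM (I \<union> J) (\<lambda>_. lborel::'a measure)))"
    unfolding J_def[symmetric] IJ(4) ..
  also have "\<dots> = (\<integral>\<^sup>+y. (\<integral>\<^sup>+z. F ((merge I J (y, z)) ` I) ((merge I J (y, z)) ` J) \<partial>PiM J (\<lambda>_. lborel)) \<partial>PiM I (\<lambda>_. lborel))"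
    by (rule product_nn_integral_fold[OF IJ(1-3) m])
  also have "\<dots> = (\<integral>\<^sup>+y. (\<integral>\<^sup>+z. F (y ` I) (z ` J) \<partial>PiM J (\<lambda>_. lborel)) \<partial>PiM I (\<lambda>_. lborel::'a measure))"
  proof -
    have e1: "(merge I J (y, z)) ` I = y ` I" for y z :: "nat \<Rightarrow> 'a" by (auto simp: merge_def)
    have e2: "(merge I J (y, z)) ` J = z ` J" for y z :: "nat \<Rightarrow> 'a" using IJ(1) by (auto simp: merge_def)
    show ?thesis by (simp only: e1 e2)
  qed
  also have "\<dots> = (\<integral>\<^sup>+y. (\<integral>\<^sup>+z. F (y ` I) (cfg (n - card I) z) \<partial>(MM (n - card I) :: (nat \<Rightarrow> 'a) measure)) \<partial>PiM I (\<lambda>_. lborel::'a measure))"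
  proof (rule nn_integral_cong)
    fix y :: "nat \<Rightarrow> 'a"
    show "(\<integral>\<^sup>+z. F (y ` I) (z ` J) \<partial>PiM J (\<lambda>_. lborel)) = (\<integral>\<^sup>+z. F (y ` I) (cfg (n - card I) z) \<partial>(MM (n - card I) :: (nat \<Rightarrow> 'a) measure))"
      by (rule RI[OF IJ(3) IJ(5) smeas2_fst[OF F]]) (use IJ(2) in auto)
  qed
  also have "\<dots> = (\<integral>\<^sup>+y. (\<integral>\<^sup>+z. F (cfg (card I) y) (cfg (n - card I) z) \<partial>(MM (n - card I) :: (nat \<Rightarrow> 'a) measure)) \<partial>(MM (card I) :: (nat \<Rightarrow> 'a) measure))"
    by (rule RI[OF IJ(2) refl inner_meas[OF F]])
  finally show ?thesis .
qed

lemma sum_group_card: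
  fixes h :: "nat \<Rightarrow> ennreal"
  assumes N: "finite N"
  shows "(\<Sum>I\<in>Pow N. h (card I)) = (\<Sum>k\<in>{..card N}. of_nat (card N choose k) * h k)"
proof -
  have "(\<Sum>I\<in>Pow N. h (card I)) = (\<Sum>k\<in>{..card N}. \<Sum>I\<in>{I. I \<in> Pow N \<and> card I = k}. h (card I))"
    by (rule sum.group[symmetric]) (use N in \<open>auto intro: card_mono\<close>)
  also have "\<dots> = (\<Sum>k\<in>{..card N}. of_nat (card N choose k) * h k)"
  proof (rule sum.cong[OF refl])
    fix k
    have "(\<Sum>I\<in>{I. I \<in> Pow N \<and> card I = k}. h (card I)) = (\<Sum>I\<in>{I. I \<in> Pow N \<and> card I = k}. h k)"
      by (rule sum.cong) auto
    also have "\<dots> = of_nat (card {I. I \<in> Pow N \<and> card I = k}) * h k" by simp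
    also have "card {I. I \<in> Pow N \<and> card I = k} = card N choose k"
      using n_subsets[OF N, of k] by simp
    finally show "(\<Sum>I\<in>{I. I \<in> Pow N \<and> card I = k}. h (card I)) = of_nat (card N choose k) * h k" .
  qed
  finally show ?thesis .
qed

lemma binom_coef:
  assumes "k \<le> n"
  shows "ennreal (1 / fact n) * (of_nat (n choose k) * X) = ennreal (1 / fact k) * (ennreal (1 / fact (n - k)) * X)"
proof -
  have r: "1 / fact n * real (n choose k) = 1 / fact k * (1 / fact (n - k))"
    using binomial_fact[OF assms, where 'a=real] by (simp add: field_simps)
  have "ennreal (1 / fact n) * of_nat (n choose k) = ennreal (1 / fact n * real (n choose k))"
  proof -
    have "of_nat (n choose k) = ennreal (real (n choose k))" by (rule ennreal_of_nat_eq_real_of_nat)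
    then show ?thesis by (simp only:) (rule ennreal_mult[symmetric], auto)
  qed
  also have "\<dots> = ennreal (1 / fact k) * ennreal (1 / fact (n - k))"
    unfolding r by (rule ennreal_mult) auto
  finally show ?thesis by (metis mult.assoc)
qed

lemma split_pointwise:
  fixes F :: "'a set \<Rightarrow> 'a set \<Rightarrow> ennreal"
  assumes N: "finite N"
  shows "(\<Sum>\<xi>\<in>Pow (x ` N). F \<xi> (x ` N - \<xi>)) \<le> (\<Sum>I\<in>Pow N. F (x ` I) (x ` (N - I)))"
proof -
  have "(\<Sum>\<xi>\<in>Pow (x ` N). F \<xi> (x ` N - \<xi>)) = (\<Sum>I\<in>Pow N. if sat x N I then F (x ` I) (x ` N - x ` I) else 0)"
    by (rule sum_pow_img[OF N])
  also have "\<dots> \<le> (\<Sum>I\<in>Pow N. F (x ` I) (x ` (N - I)))"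
  proof (rule sum_mono)
    fix I assume "I \<in> Pow N"
    then show "(if sat x N I then F (x ` I) (x ` N - x ` I) else 0) \<le> F (x ` I) (x ` (N - I))"
      using sat_image_diff[of x N I] by auto
  qed
  finally show ?thesis .
qed

lemma SPLIT:
  fixes F :: "'a::euclidean_space set \<Rightarrow> 'a set \<Rightarrow> ennreal"
  assumes F: "smeas2 F"
  shows "LP_nn (\<lambda>\<eta>. \<Sum>\<xi>\<in>Pow \<eta>. F \<xi> (\<eta> - \<xi>)) \<le> LP_nn (\<lambda>\<xi>. LP_nn (F \<xi>))"
proof -
  define a where "a k m = (\<integral>\<^sup>+y. (\<integral>\<^sup>+z. F (cfg k y) (cfg m z) \<partial>(MM m :: (nat \<Rightarrow> 'a) measure)) \<partial>(MM k :: (nat \<Rightarrow> 'a) measure))" for k m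
  define b where "b k m = ennreal (1 / fact k) * (ennreal (1 / fact m) * a k m)" for k m
  have termle: "ennreal (1 / fact n) * (\<integral>\<^sup>+x. (\<Sum>\<xi>\<in>Pow (cfg n x). F \<xi> (cfg n x - \<xi>)) \<partial>(MM n :: (nat \<Rightarrow> 'a) measure))
      \<le> (\<Sum>k\<le>n. b k (n - k))" for n
  proof -
    have mI: "(\<lambda>x. F (x ` I) (x ` ({..<n} - I))) \<in> borel_measurable (MM n :: (nat \<Rightarrow> 'a) measure)" if "I \<in> Pow {..<n}" for I
    proof -
      have fI: "finite I" using that finite_subset by auto
      have "(\<lambda>x. F ((\<lambda>i. x i) ` I) ((\<lambda>i. x i) ` ({..<n} - I))) \<in> borel_measurable (MM n :: (nat \<Rightarrow> 'a) measure)"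
        by (rule S21[OF F fI]) (use proj_meas that in auto)
      then show ?thesis by simp
    qed
    have "(\<integral>\<^sup>+x. (\<Sum>\<xi>\<in>Pow (cfg n x). F \<xi> (cfg n x - \<xi>)) \<partial>(MM n :: (nat \<Rightarrow> 'a) measure))
        \<le> (\<integral>\<^sup>+x. (\<Sum>I\<in>Pow {..<n}. F (x ` I) (x ` ({..<n} - I))) \<partial>(MM n :: (nat \<Rightarrow> 'a) measure))"
      by (rule nn_integral_mono) (simp only: cfg_def split_pointwise[OF finite_lessThan])
    also have "\<dots> = (\<Sum>I\<in>Pow {..<n}. (\<integral>\<^sup>+x. F (x ` I) (x ` ({..<n} - I)) \<partial>(MM n :: (nat \<Rightarrow> 'a) measure)))"
      by (rule nn_integral_sum) (rule mI)
    also have "\<dots> = (\<Sum>I\<in>Pow {..<n}. a (card I) (n - card I))"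
      unfolding a_def by (rule sum.cong[OF refl]) (rule split_term[OF F], auto)
    also have "\<dots> = (\<Sum>k\<in>{..n}. of_nat (n choose k) * a k (n - k))"
      using sum_group_card[OF finite_lessThan[of n], of "\<lambda>k. a k (n - k)"] by simp
    finally have le: "(\<integral>\<^sup>+x. (\<Sum>\<xi>\<in>Pow (cfg n x). F \<xi> (cfg n x - \<xi>)) \<partial>(MM n :: (nat \<Rightarrow> 'a) measure))
        \<le> (\<Sum>k\<in>{..n}. of_nat (n choose k) * a k (n - k))" .
    have "ennreal (1 / fact n) * (\<integral>\<^sup>+x. (\<Sum>\<xi>\<in>Pow (cfg n x). F \<xi> (cfg n x - \<xi>)) \<partial>(MM n :: (nat \<Rightarrow> 'a) measure))
        \<le> ennreal (1 / fact n) * (\<Sum>k\<in>{..n}. of_nat (n choose k) * a k (n - k))"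
      by (rule mult_left_mono[OF le]) simp
    also have "\<dots> = (\<Sum>k\<le>n. b k (n - k))"
      unfolding sum_distrib_left b_def by (rule sum.cong[OF refl]) (simp add: binom_coef)
    finally show ?thesis .
  qed
  have "LP_nn (\<lambda>\<eta>. \<Sum>\<xi>\<in>Pow \<eta>. F \<xi> (\<eta> - \<xi>)) \<le> (\<Sum>n. \<Sum>k\<le>n. b k (n - k))"
    unfolding LP_nn_def by (rule suminf_le[OF termle summableI summableI])
  also have "\<dots> \<le> (\<Sum>k. \<Sum>m. b k m)" by (rule DIAG)
  also have "\<dots> = LP_nn (\<lambda>\<xi>. LP_nn (F \<xi>))"
  proof -
    have "(\<integral>\<^sup>+y. LP_nn (F (cfg k y)) \<partial>(MM k :: (nat \<Rightarrow> 'a) measure))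
        = (\<Sum>m. ennreal (1 / fact m) * a k m)" for k
    proof -
      have "(\<integral>\<^sup>+y. LP_nn (F (cfg k y)) \<partial>(MM k :: (nat \<Rightarrow> 'a) measure))
          = (\<integral>\<^sup>+y. (\<Sum>m. ennreal (1 / fact m) * (\<integral>\<^sup>+z. F (cfg k y) (cfg m z) \<partial>(MM m :: (nat \<Rightarrow> 'a) measure))) \<partial>(MM k :: (nat \<Rightarrow> 'a) measure))"
        unfolding LP_nn_def ..
      also have "\<dots> = (\<Sum>m. (\<integral>\<^sup>+y. ennreal (1 / fact m) * (\<integral>\<^sup>+z. F (cfg k y) (cfg m z) \<partial>(MM m :: (nat \<Rightarrow> 'a) measure)) \<partial>(MM k :: (nat \<Rightarrow> 'a) measure)))"
      proof (rule nn_integral_suminf)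
        fix m
        show "(\<lambda>y. ennreal (1 / fact m) * (\<integral>\<^sup>+z. F (cfg k y) (cfg m z) \<partial>(MM m :: (nat \<Rightarrow> 'a) measure))) \<in> borel_measurable (MM k :: (nat \<Rightarrow> 'a) measure)"
          using inner_meas[OF F, of m] unfolding smeas_def by (intro borel_measurable_times_ennreal) auto
      qed
      also have "\<dots> = (\<Sum>m. ennreal (1 / fact m) * a k m)"
      proof (rule suminf_cong)
        fix m
        show "(\<integral>\<^sup>+y. ennreal (1 / fact m) * (\<integral>\<^sup>+z. F (cfg k y) (cfg m z) \<partial>(MM m :: (nat \<Rightarrow> 'a) measure)) \<partial>(MM k :: (nat \<Rightarrow> 'a) measure)) = ennreal (1 / fact m) * a k m"
          unfolding a_def using inner_meas[OF F, of m] unfolding smeas_def by (intro nn_integral_cmult) auto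
      qed
      finally show ?thesis .
    qed
    then show ?thesis unfolding LP_nn_def[of "\<lambda>\<xi>. LP_nn (F \<xi>)"] b_def by simp
  qed
  finally show ?thesis .
qed


lemma card_meas_nat:
  fixes u :: "nat \<Rightarrow> 'n \<Rightarrow> 'a::euclidean_space"
  assumes A: "finite A" and u: "\<And>i. i \<in> A \<Longrightarrow> u i \<in> borel_measurable N"
  shows "(\<lambda>\<omega>. card ((\<lambda>i. u i \<omega>) ` A)) \<in> measurable N (count_space UNIV)"
  unfolding measurable_count_space_eq2_countable
proof (intro conjI ballI)
  show "(\<lambda>\<omega>. card ((\<lambda>i. u i \<omega>) ` A)) \<in> space N \<rightarrow> UNIV" by simp
  fix a :: nat
  have "{\<omega>\<in>space N. real (card ((\<lambda>i. u i \<omega>) ` A)) = real a} \<in> sets N"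
    by (rule measurable_equality_set[OF card_meas[OF A u] measurable_const]) auto
  moreover have "(\<lambda>\<omega>. card ((\<lambda>i. u i \<omega>) ` A)) -` {a} \<inter> space N = {\<omega>\<in>space N. real (card ((\<lambda>i. u i \<omega>) ` A)) = real a}"
    by auto
  ultimately show "(\<lambda>\<omega>. card ((\<lambda>i. u i \<omega>) ` A)) -` {a} \<inter> space N \<in> sets N" by simp
qed

lemma fun_card_meas:
  fixes u :: "nat \<Rightarrow> 'n \<Rightarrow> 'a::euclidean_space" and h :: "nat \<Rightarrow> 'b::topological_space"
  assumes A: "finite A" and u: "\<And>i. i \<in> A \<Longrightarrow> u i \<in> borel_measurable N"
  shows "(\<lambda>\<omega>. h (card ((\<lambda>i. u i \<omega>) ` A))) \<in> borel_measurable N"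
  by (rule measurable_compose[OF card_meas_nat[OF A u]]) (unfold measurable_count_space_eq1, auto)

lemma S1f:
  fixes u :: "nat \<Rightarrow> 'n \<Rightarrow> 'a::euclidean_space"
  assumes g: "smeas g" and A: "finite A" and u: "\<And>i. i \<in> A \<Longrightarrow> u i \<in> borel_measurable N"
    and P: "\<And>i. i \<in> A \<Longrightarrow> Measurable.pred N (P i)"
  shows "(\<lambda>\<omega>. g ((\<lambda>i. u i \<omega>) ` {i\<in>A. P i \<omega>})) \<in> borel_measurable N"
proof -
  have "(\<lambda>\<omega>. (\<lambda>J \<omega>. g ((\<lambda>i. u i \<omega>) ` J)) {i\<in>A. P i \<omega>} \<omega>) \<in> borel_measurable N"
  proof (rule PWf[OF A P])
    fix J assume "J \<subseteq> A"
    then show "(\<lambda>\<omega>. g ((\<lambda>i. u i \<omega>) ` J)) \<in> borel_measurable N"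
      using A u by (intro S1[OF g]) (auto intro: finite_subset)
  qed
  then show ?thesis by simp
qed

lemma fun_card_meas_f:
  fixes u :: "nat \<Rightarrow> 'n \<Rightarrow> 'a::euclidean_space" and h :: "nat \<Rightarrow> 'b::topological_space"
  assumes A: "finite A" and u: "\<And>i. i \<in> A \<Longrightarrow> u i \<in> borel_measurable N"
    and P: "\<And>i. i \<in> A \<Longrightarrow> Measurable.pred N (P i)"
  shows "(\<lambda>\<omega>. h (card ((\<lambda>i. u i \<omega>) ` {i\<in>A. P i \<omega>}))) \<in> borel_measurable N"
proof -
  have "(\<lambda>\<omega>. (\<lambda>J \<omega>. h (card ((\<lambda>i. u i \<omega>) ` J))) {i\<in>A. P i \<omega>} \<omega>) \<in> borel_measurable N"
  proof (rule PWf[OF A P])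
    fix J assume "J \<subseteq> A"
    then show "(\<lambda>\<omega>. h (card ((\<lambda>i. u i \<omega>) ` J))) \<in> borel_measurable N"
      using A u by (intro fun_card_meas) (auto intro: finite_subset)
  qed
  then show ?thesis by simp
qed

lemma R1f:
  fixes u :: "nat \<Rightarrow> 'n \<Rightarrow> 'a::euclidean_space"
  assumes g: "rate_meas r" and A: "finite A" and u: "\<And>i. i \<in> A \<Longrightarrow> u i \<in> borel_measurable N"
    and v: "v \<in> borel_measurable N" and P: "\<And>i. i \<in> A \<Longrightarrow> Measurable.pred N (P i)"
  shows "(\<lambda>\<omega>. r (v \<omega>) ((\<lambda>i. u i \<omega>) ` {i\<in>A. P i \<omega>})) \<in> borel_measurable N"
proof -
  have "(\<lambda>\<omega>. (\<lambda>J \<omega>. r (v \<omega>) ((\<lambda>i. u i \<omega>) ` J)) {i\<in>A. P i \<omega>} \<omega>) \<in> borel_measurable N"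
  proof (rule PWf[OF A P])
    fix J assume "J \<subseteq> A"
    then show "(\<lambda>\<omega>. r (v \<omega>) ((\<lambda>i. u i \<omega>) ` J)) \<in> borel_measurable N"
      using A u by (intro R1[OF g _ _ v]) (auto intro: finite_subset)
  qed
  then show ?thesis by simp
qed

lemma Kinv_meas0:
  fixes u :: "nat \<Rightarrow> 'n \<Rightarrow> 'a::euclidean_space"
  assumes r: "rate_meas r" and A: "finite A" and B: "finite B"
    and u: "\<And>i. i \<in> A \<union> B \<Longrightarrow> u i \<in> borel_measurable N" and v: "v \<in> borel_measurable N"
  shows "(\<lambda>\<omega>. Kinv (\<lambda>\<zeta>. r (v \<omega>) (\<zeta> \<union> (\<lambda>i. u i \<omega>) ` B)) ((\<lambda>i. u i \<omega>) ` A)) \<in> borel_measurable N"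
  unfolding Kinv_def
proof (rule PP[OF A, where \<Psi>'="\<lambda>L \<omega>. (-1) ^ card ((\<lambda>i. u i \<omega>) ` (A - L)) * r (v \<omega>) ((\<lambda>i. u i \<omega>) ` (L \<union> B))"])
  show "\<And>i. i \<in> A \<Longrightarrow> u i \<in> borel_measurable N" using u by auto
  fix L assume L: "L \<subseteq> A"
  have fL: "finite L" using L A finite_subset by blast
  show "(\<lambda>\<omega>. (-1) ^ card ((\<lambda>i. u i \<omega>) ` (A - L)) * r (v \<omega>) ((\<lambda>i. u i \<omega>) ` (L \<union> B))) \<in> borel_measurable N"
  proof (rule borel_measurable_times)
    show "(\<lambda>\<omega>. (-1::real) ^ card ((\<lambda>i. u i \<omega>) ` (A - L))) \<in> borel_measurable N"
      using A u by (intro fun_card_meas) auto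
    show "(\<lambda>\<omega>. r (v \<omega>) ((\<lambda>i. u i \<omega>) ` (L \<union> B))) \<in> borel_measurable N"
      using fL B u L by (intro R1[OF r _ _ v]) auto
  qed
next
  fix \<omega> L assume L: "L \<subseteq> A" and s: "sat (\<lambda>i. u i \<omega>) A L"
  have "(\<lambda>i. u i \<omega>) ` A - (\<lambda>i. u i \<omega>) ` L = (\<lambda>i. u i \<omega>) ` (A - L)"
    by (rule sat_image_diff[OF s L])
  then show "(-1) ^ card ((\<lambda>i. u i \<omega>) ` A - (\<lambda>i. u i \<omega>) ` L) * r (v \<omega>) ((\<lambda>i. u i \<omega>) ` L \<union> (\<lambda>i. u i \<omega>) ` B)
      = (-1) ^ card ((\<lambda>i. u i \<omega>) ` (A - L)) * r (v \<omega>) ((\<lambda>i. u i \<omega>) ` (L \<union> B))"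
    by (simp add: image_Un)
qed

lemma Kinv_meas:
  fixes u :: "nat \<Rightarrow> 'n \<Rightarrow> 'a::euclidean_space"
  assumes r: "rate_meas r" and A: "finite A" and B: "finite B"
    and u: "\<And>i. i \<in> A \<union> B \<Longrightarrow> u i \<in> borel_measurable N" and v: "v \<in> borel_measurable N"
    and PA: "\<And>i. i \<in> A \<Longrightarrow> Measurable.pred N (PA i)"
    and PB: "\<And>i. i \<in> B \<Longrightarrow> Measurable.pred N (PB i)"
  shows "(\<lambda>\<omega>. Kinv (\<lambda>\<zeta>. r (v \<omega>) (\<zeta> \<union> (\<lambda>i. u i \<omega>) ` {i\<in>B. PB i \<omega>})) ((\<lambda>i. u i \<omega>) ` {i\<in>A. PA i \<omega>})) \<in> borel_measurable N"
proof -
  have "(\<lambda>\<omega>. (\<lambda>J \<omega>. Kinv (\<lambda>\<zeta>. r (v \<omega>) (\<zeta> \<union> (\<lambda>i. u i \<omega>) ` {i\<in>B. PB i \<omega>})) ((\<lambda>i. u i \<omega>) ` J)) {i\<in>A. PA i \<omega>} \<omega>) \<in> borel_measurable N"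
  proof (rule PWf[OF A PA])
    fix J assume J: "J \<subseteq> A"
    have "(\<lambda>\<omega>. (\<lambda>K \<omega>. Kinv (\<lambda>\<zeta>. r (v \<omega>) (\<zeta> \<union> (\<lambda>i. u i \<omega>) ` K)) ((\<lambda>i. u i \<omega>) ` J)) {i\<in>B. PB i \<omega>} \<omega>) \<in> borel_measurable N"
    proof (rule PWf[OF B PB])
      fix K assume K: "K \<subseteq> B"
      show "(\<lambda>\<omega>. Kinv (\<lambda>\<zeta>. r (v \<omega>) (\<zeta> \<union> (\<lambda>i. u i \<omega>) ` K)) ((\<lambda>i. u i \<omega>) ` J)) \<in> borel_measurable N"
        using J K A B u by (intro Kinv_meas0[OF r _ _ _ v]) (auto intro: finite_subset)
    qed
    then show "(\<lambda>\<omega>. Kinv (\<lambda>\<zeta>. r (v \<omega>) (\<zeta> \<union> (\<lambda>i. u i \<omega>) ` {i\<in>B. PB i \<omega>})) ((\<lambda>i. u i \<omega>) ` J)) \<in> borel_measurable N"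
      by simp
  qed
  then show ?thesis by simp
qed


definition smeas2P :: "('a::euclidean_space set \<Rightarrow> 'a set \<Rightarrow> 'a \<Rightarrow> 'b::topological_space) \<Rightarrow> bool" where
  "smeas2P F \<longleftrightarrow> (\<forall>k m. (\<lambda>q. F (cfg k (fst (fst q))) (cfg m (snd (fst q))) (snd q))
      \<in> borel_measurable (((MM k :: (nat \<Rightarrow> 'a) measure) \<Otimes>\<^sub>M MM m) \<Otimes>\<^sub>M lborel))"

definition famP :: "nat \<Rightarrow> (nat \<Rightarrow> 'a) \<times> (nat \<Rightarrow> 'a) \<Rightarrow> nat \<Rightarrow> 'a" where
  "famP k p i = (if i < k then fst p i else snd p (i - k))"

lemma famP_meas:
  "i < k + m \<Longrightarrow> (\<lambda>p. famP k p i) \<in> borel_measurable ((MM k :: (nat \<Rightarrow> 'a::euclidean_space) measure) \<Otimes>\<^sub>M MM m)"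
proof (cases "i < k")
  case True
  then show ?thesis unfolding famP_def
    using measurable_compose[OF measurable_fst proj_meas[of i "{..<k}"]] by (simp add: comp_def)
next
  case False
  assume "i < k + m"
  then have "i - k < m" using False by arith
  then show ?thesis unfolding famP_def
    using False measurable_compose[OF measurable_snd proj_meas[of "i - k" "{..<m}"]] by (simp add: comp_def)
qed

lemma famP_img1: "(\<lambda>i. famP k p i) ` {..<k} = cfg k (fst p)"
  unfolding famP_def cfg_def by auto

lemma famP_img2: "(\<lambda>i. famP k p i) ` {k..<k+m} = cfg m (snd p)"
proof -
  have "(\<lambda>i. famP k p i) ` {k..<k+m} = (\<lambda>i. snd p (i - k)) ` {k..<k+m}"
    unfolding famP_def by auto
  also have "\<dots> = snd p ` {..<m}"
  proof
    show "(\<lambda>i. snd p (i - k)) ` {k..<k + m} \<subseteq> snd p ` {..<m}" by auto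
    show "snd p ` {..<m} \<subseteq> (\<lambda>i. snd p (i - k)) ` {k..<k + m}"
    proof
      fix v assume "v \<in> snd p ` {..<m}"
      then obtain j where "j < m" "v = snd p j" by auto
      then show "v \<in> (\<lambda>i. snd p (i - k)) ` {k..<k + m}" by (intro image_eqI[of _ _ "j + k"]) auto
    qed
  qed
  finally show ?thesis unfolding cfg_def .
qed

definition fam3 :: "nat \<Rightarrow> nat \<Rightarrow> ((nat \<Rightarrow> 'a) \<times> (nat \<Rightarrow> 'a)) \<times> 'a \<Rightarrow> nat \<Rightarrow> 'a" where
  "fam3 k m q i = (if i < k + m then famP k (fst q) i else snd q)"

lemma fam3_meas:
  "(\<lambda>q. fam3 k m q i) \<in> borel_measurable (((MM k :: (nat \<Rightarrow> 'a::euclidean_space) measure) \<Otimes>\<^sub>M MM m) \<Otimes>\<^sub>M lborel)"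
proof (cases "i < k + m")
  case True
  then show ?thesis unfolding fam3_def
    using measurable_compose[OF measurable_fst famP_meas[OF True]] by (simp add: comp_def)
next
  case False
  then show ?thesis unfolding fam3_def by simp
qed

lemma fam3_img1: "(\<lambda>i. fam3 k m q i) ` {..<k} = cfg k (fst (fst q))"
  using famP_img1[of k "fst q"] unfolding fam3_def by (auto simp: image_iff)

lemma fam3_img2: "(\<lambda>i. fam3 k m q i) ` {k..<k+m} = cfg m (snd (fst q))"
proof -
  have "(\<lambda>i. fam3 k m q i) ` {k..<k+m} = (\<lambda>i. famP k (fst q) i) ` {k..<k+m}"
    unfolding fam3_def by (intro image_cong) auto
  then show ?thesis using famP_img2 by simp
qed

lemma fam3_pt: "fam3 k m q (k + m) = snd q"
  unfolding fam3_def by simp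

lemma fam3_ins: "(\<lambda>i. fam3 k m q i) ` insert (k + m) {..<k} = insert (snd q) (cfg k (fst (fst q)))"
  by (simp add: fam3_img1 fam3_pt)

definition famS :: "nat \<Rightarrow> (nat \<Rightarrow> 'a) \<times> 'a \<Rightarrow> nat \<Rightarrow> 'a" where
  "famS n p i = (if i < n then fst p i else snd p)"

lemma famS_meas:
  "(\<lambda>p. famS n p i) \<in> borel_measurable ((MM n :: (nat \<Rightarrow> 'a::euclidean_space) measure) \<Otimes>\<^sub>M lborel)"
proof (cases "i < n")
  case True
  then show ?thesis unfolding famS_def
    using measurable_compose[OF measurable_fst proj_meas[of i "{..<n}"]] by (simp add: comp_def)
next
  case False
  then show ?thesis unfolding famS_def by simp
qed

lemma famS_img: "(\<lambda>i. famS n p i) ` {..<n} = cfg n (fst p)"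
  unfolding famS_def cfg_def by auto

lemma famS_pt: "famS n p n = snd p"
  unfolding famS_def by simp

definition famH :: "nat \<Rightarrow> ((nat \<Rightarrow> 'a) \<times> 'a) \<times> (nat \<Rightarrow> 'a) \<Rightarrow> nat \<Rightarrow> 'a" where
  "famH n q i = (if i \<le> n then famS n (fst q) i else snd q (i - Suc n))"

lemma famH_meas:
  "i < Suc n + m \<Longrightarrow> (\<lambda>q. famH n q i) \<in> borel_measurable (((MM n :: (nat \<Rightarrow> 'a::euclidean_space) measure) \<Otimes>\<^sub>M lborel) \<Otimes>\<^sub>M MM m)"
proof (cases "i \<le> n")
  case True
  then show ?thesis unfolding famH_def
    using measurable_compose[OF measurable_fst famS_meas] by (simp add: comp_def)
next
  case False
  assume "i < Suc n + m"
  then have "i - Suc n < m" using False by arith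
  then show ?thesis unfolding famH_def
    using False measurable_compose[OF measurable_snd proj_meas[of "i - Suc n" "{..<m}"]] by (simp add: comp_def)
qed

lemma famH_img1: "(\<lambda>i. famH n q i) ` {..<n} = cfg n (fst (fst q))"
  unfolding famH_def famS_def cfg_def by (auto simp: image_iff)

lemma famH_pt: "famH n q n = snd (fst q)"
  unfolding famH_def famS_def by simp

lemma famH_img2: "(\<lambda>i. famH n q i) ` {Suc n..<Suc n+m} = cfg m (snd q)"
proof -
  have "(\<lambda>i. famH n q i) ` {Suc n..<Suc n+m} = (\<lambda>i. snd q (i - Suc n)) ` {Suc n..<Suc n+m}"
    unfolding famH_def by auto
  also have "\<dots> = snd q ` {..<m}"
  proof
    show "(\<lambda>i. snd q (i - Suc n)) ` {Suc n..<Suc n + m} \<subseteq> snd q ` {..<m}" by auto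
    show "snd q ` {..<m} \<subseteq> (\<lambda>i. snd q (i - Suc n)) ` {Suc n..<Suc n + m}"
    proof
      fix v assume "v \<in> snd q ` {..<m}"
      then obtain j where "j < m" "v = snd q j" by auto
      then show "v \<in> (\<lambda>i. snd q (i - Suc n)) ` {Suc n..<Suc n + m}" by (intro image_eqI[of _ _ "j + Suc n"]) auto
    qed
  qed
  finally show ?thesis unfolding cfg_def .
qed

lemma pred_const_True: "Measurable.pred N (\<lambda>_. True)" by simp

lemma pred_neq:
  fixes u v :: "'n \<Rightarrow> 'a::euclidean_space"
  assumes "u \<in> borel_measurable N" "v \<in> borel_measurable N"
  shows "Measurable.pred N (\<lambda>\<omega>. u \<omega> \<noteq> v \<omega>)"
  using pred_intros_logic(2)[OF pred_eq_pts[OF assms]] by simp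


lemma Kd_smeas2:
  fixes r :: "'a::euclidean_space \<Rightarrow> 'a set \<Rightarrow> real" and \<phi> :: "real \<Rightarrow> real"
  assumes r: "rate_meas r" and \<phi>: "\<phi> \<in> borel_measurable borel"
  shows "smeas2 (\<lambda>\<xi> \<zeta>. \<Sum>y\<in>\<xi>. \<phi> (Kinv (\<lambda>\<zeta>'. r y (\<zeta>' \<union> (\<xi> - {y}))) \<zeta>))"
  unfolding smeas2_def
proof (intro allI)
  fix k m
  let ?M = "(MM k :: (nat \<Rightarrow> 'a) measure) \<Otimes>\<^sub>M (MM m :: (nat \<Rightarrow> 'a) measure)"
  have m: "(\<lambda>p. \<Sum>v\<in>(\<lambda>i. famP k p i) ` {..<k}. \<phi> (Kinv (\<lambda>\<zeta>'. r v (\<zeta>' \<union> ((\<lambda>i. famP k p i) ` {..<k} - {v}))) ((\<lambda>i. famP k p i) ` {k..<k+m})))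
      \<in> borel_measurable ?M"
  proof (rule PS[where \<Psi>'="\<lambda>i p. \<phi> (Kinv (\<lambda>\<zeta>'. r (famP k p i) (\<zeta>' \<union> (\<lambda>j. famP k p j) ` {j\<in>{..<k}. famP k p j \<noteq> famP k p i})) ((\<lambda>j. famP k p j) ` {j\<in>{k..<k+m}. True}))"])
    show "finite {..<k}" by simp
    show "(\<lambda>p. famP k p i) \<in> borel_measurable ?M" if "i \<in> {..<k}" for i
      using that by (intro famP_meas) auto
    show "(\<lambda>p. \<phi> (Kinv (\<lambda>\<zeta>'. r (famP k p i) (\<zeta>' \<union> (\<lambda>j. famP k p j) ` {j\<in>{..<k}. famP k p j \<noteq> famP k p i})) ((\<lambda>j. famP k p j) ` {j\<in>{k..<k+m}. True})))
      \<in> borel_measurable ?M" if i: "i \<in> {..<k}" for i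
    proof (rule measurable_compose[OF _ \<phi>])
      show "(\<lambda>p. Kinv (\<lambda>\<zeta>'. r (famP k p i) (\<zeta>' \<union> (\<lambda>j. famP k p j) ` {j\<in>{..<k}. famP k p j \<noteq> famP k p i})) ((\<lambda>j. famP k p j) ` {j\<in>{k..<k+m}. True}))
        \<in> borel_measurable ?M"
      proof (rule Kinv_meas[OF r, where PA="\<lambda>_ _. True"])
        show "(\<lambda>p. famP k p j) \<in> borel_measurable ?M" if "j \<in> {k..<k+m} \<union> {..<k}" for j
          using that by (intro famP_meas) auto
        show "(\<lambda>p. famP k p i) \<in> borel_measurable ?M" using i by (intro famP_meas) auto
        show "Measurable.pred ?M (\<lambda>p. famP k p j \<noteq> famP k p i)" if "j \<in> {..<k}" for j
          using that i by (intro pred_neq famP_meas) auto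
      qed auto
    qed
    fix p :: "(nat \<Rightarrow> 'a) \<times> (nat \<Rightarrow> 'a)" and i assume "i \<in> {..<k}"
    have "(\<lambda>i. famP k p i) ` {..<k} - {famP k p i} = (\<lambda>j. famP k p j) ` {j\<in>{..<k}. famP k p j \<noteq> famP k p i}"
      by auto
    then show "\<phi> (Kinv (\<lambda>\<zeta>'. r (famP k p i) (\<zeta>' \<union> ((\<lambda>i. famP k p i) ` {..<k} - {famP k p i}))) ((\<lambda>i. famP k p i) ` {k..<k+m}))
      = \<phi> (Kinv (\<lambda>\<zeta>'. r (famP k p i) (\<zeta>' \<union> (\<lambda>j. famP k p j) ` {j\<in>{..<k}. famP k p j \<noteq> famP k p i})) ((\<lambda>j. famP k p j) ` {j\<in>{k..<k+m}. True}))"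
      by (simp only: simp_thms Collect_mem_eq)
  qed
  show "(\<lambda>(x, y). \<Sum>v\<in>cfg k x. \<phi> (Kinv (\<lambda>\<zeta>'. r v (\<zeta>' \<union> (cfg k x - {v}))) (cfg m y))) \<in> borel_measurable ?M"
    using m by (rule measurable_cong[THEN iffD1, rotated]) (simp add: famP_img1 famP_img2 split_beta)
qed

lemma Kb_smeas2P:
  fixes r :: "'a::euclidean_space \<Rightarrow> 'a set \<Rightarrow> real"
  assumes r: "rate_meas r"
  shows "smeas2P (\<lambda>\<xi> \<zeta> t. Kinv (\<lambda>\<zeta>'. r t (\<zeta>' \<union> \<xi>)) \<zeta>)"
  unfolding smeas2P_def
proof (intro allI)
  fix k m
  let ?M = "((MM k :: (nat \<Rightarrow> 'a) measure) \<Otimes>\<^sub>M (MM m :: (nat \<Rightarrow> 'a) measure)) \<Otimes>\<^sub>M (lborel :: 'a measure)"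
  have m: "(\<lambda>q. Kinv (\<lambda>\<zeta>'. r (fam3 k m q (k + m)) (\<zeta>' \<union> (\<lambda>j. fam3 k m q j) ` {j\<in>{..<k}. True})) ((\<lambda>j. fam3 k m q j) ` {j\<in>{k..<k+m}. True}))
      \<in> borel_measurable ?M"
    by (rule Kinv_meas[OF r, where PA="\<lambda>_ _. True" and PB="\<lambda>_ _. True"]) (auto intro: fam3_meas)
  show "(\<lambda>q. Kinv (\<lambda>\<zeta>'. r (snd q) (\<zeta>' \<union> cfg k (fst (fst q)))) (cfg m (snd (fst q)))) \<in> borel_measurable ?M"
    using m by (rule measurable_cong[THEN iffD1, rotated]) (simp only: simp_thms Collect_mem_eq fam3_img1 fam3_img2 fam3_pt)
qed

lemma ins_smeas2P:
  fixes G :: "'a::euclidean_space set \<Rightarrow> 'b::topological_space"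
  assumes G: "smeas G"
  shows "smeas2P (\<lambda>\<xi> \<zeta> t. G (insert t \<xi>))"
  unfolding smeas2P_def
proof (intro allI)
  fix k m
  let ?M = "((MM k :: (nat \<Rightarrow> 'a) measure) \<Otimes>\<^sub>M (MM m :: (nat \<Rightarrow> 'a) measure)) \<Otimes>\<^sub>M (lborel :: 'a measure)"
  have m: "(\<lambda>q. G ((\<lambda>j. fam3 k m q j) ` insert (k + m) {..<k})) \<in> borel_measurable ?M"
    by (rule S1[OF G]) (auto intro: fam3_meas)
  have e: "(\<lambda>q. G ((\<lambda>j. fam3 k m q j) ` insert (k + m) {..<k})) = (\<lambda>q. G (insert (snd q) (cfg k (fst (fst q)))))"
    by (simp only: fam3_ins)
  show "(\<lambda>q. G (insert (snd q) (cfg k (fst (fst q))))) \<in> borel_measurable ?M"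
    using m unfolding e .
qed

lemma smeas2P_arg1:
  fixes g :: "'a::euclidean_space set \<Rightarrow> 'b::topological_space"
  assumes g: "smeas g"
  shows "smeas2P (\<lambda>\<xi> \<zeta> t. g \<xi>)"
  unfolding smeas2P_def
proof (intro allI)
  fix k m
  let ?M = "((MM k :: (nat \<Rightarrow> 'a) measure) \<Otimes>\<^sub>M (MM m :: (nat \<Rightarrow> 'a) measure)) \<Otimes>\<^sub>M (lborel :: 'a measure)"
  have m1: "(\<lambda>q. g ((\<lambda>j. fam3 k m q j) ` {..<k})) \<in> borel_measurable ?M"
    by (rule S1[OF g]) (auto intro: fam3_meas)
  have e: "(\<lambda>q. g ((\<lambda>j. fam3 k m q j) ` {..<k})) = (\<lambda>q. g (cfg k (fst (fst q))))"
    by (simp only: fam3_img1)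
  show "(\<lambda>q. g (cfg k (fst (fst q)))) \<in> borel_measurable ?M"
    using m1 unfolding e .
qed

lemma smeas2P_arg2:
  fixes g :: "'a::euclidean_space set \<Rightarrow> 'b::topological_space"
  assumes g: "smeas g"
  shows "smeas2P (\<lambda>\<xi> \<zeta> t. g \<zeta>)"
  unfolding smeas2P_def
proof (intro allI)
  fix k m
  let ?M = "((MM k :: (nat \<Rightarrow> 'a) measure) \<Otimes>\<^sub>M (MM m :: (nat \<Rightarrow> 'a) measure)) \<Otimes>\<^sub>M (lborel :: 'a measure)"
  have m2: "(\<lambda>q. g ((\<lambda>j. fam3 k m q j) ` {k..<k+m})) \<in> borel_measurable ?M"
    by (rule S1[OF g]) (auto intro: fam3_meas)
  have e: "(\<lambda>q. g ((\<lambda>j. fam3 k m q j) ` {k..<k+m})) = (\<lambda>q. g (cfg m (snd (fst q))))"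
    by (simp only: fam3_img2)
  show "(\<lambda>q. g (cfg m (snd (fst q)))) \<in> borel_measurable ?M"
    using m2 unfolding e .
qed

lemma smeas2_arg1:
  fixes g :: "'a::euclidean_space set \<Rightarrow> 'b::topological_space"
  assumes g: "smeas g"
  shows "smeas2 (\<lambda>\<xi> \<zeta>. g \<xi>)"
  unfolding smeas2_def
proof (intro allI)
  fix k m
  show "(\<lambda>(x, y). g (cfg k x)) \<in> borel_measurable ((MM k :: (nat \<Rightarrow> 'a) measure) \<Otimes>\<^sub>M (MM m :: (nat \<Rightarrow> 'a) measure))"
    using measurable_compose[OF measurable_fst[of "MM k :: (nat \<Rightarrow> 'a) measure" "MM m :: (nat \<Rightarrow> 'a) measure"] g[unfolded smeas_def, rule_format, of k]] by (simp add: comp_def split_beta)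
qed

lemma smeas2_arg2:
  fixes g :: "'a::euclidean_space set \<Rightarrow> 'b::topological_space"
  assumes g: "smeas g"
  shows "smeas2 (\<lambda>\<xi> \<zeta>. g \<zeta>)"
  unfolding smeas2_def
proof (intro allI)
  fix k m
  show "(\<lambda>(x, y). g (cfg m y)) \<in> borel_measurable ((MM k :: (nat \<Rightarrow> 'a) measure) \<Otimes>\<^sub>M (MM m :: (nat \<Rightarrow> 'a) measure))"
    using measurable_compose[OF measurable_snd[of "MM k :: (nat \<Rightarrow> 'a) measure" "MM m :: (nat \<Rightarrow> 'a) measure"] g[unfolded smeas_def, rule_format, of m]] by (simp add: comp_def split_beta)
qed

lemma smeas2P_nnint:
  fixes F :: "'a::euclidean_space set \<Rightarrow> 'a set \<Rightarrow> 'a \<Rightarrow> ennreal"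
  assumes F: "smeas2P F"
  shows "smeas2 (\<lambda>\<xi> \<zeta>. \<integral>\<^sup>+t. F \<xi> \<zeta> t \<partial>lborel)"
  unfolding smeas2_def
proof (intro allI)
  fix k m
  have "(\<lambda>p. \<integral>\<^sup>+t. F (cfg k (fst p)) (cfg m (snd p)) t \<partial>lborel) \<in> borel_measurable ((MM k :: (nat \<Rightarrow> 'a) measure) \<Otimes>\<^sub>M (MM m :: (nat \<Rightarrow> 'a) measure))"
    using lborel.borel_measurable_nn_integral[of "\<lambda>p t. F (cfg k (fst p)) (cfg m (snd p)) t"] F[unfolded smeas2P_def, rule_format, of k m]
    by (simp add: split_beta')
  then show "(\<lambda>(x, y). \<integral>\<^sup>+t. F (cfg k x) (cfg m y) t \<partial>lborel) \<in> borel_measurable ((MM k :: (nat \<Rightarrow> 'a) measure) \<Otimes>\<^sub>M (MM m :: (nat \<Rightarrow> 'a) measure))"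
    by (simp add: split_beta)
qed

lemma smeas2P_int:
  fixes F :: "'a::euclidean_space set \<Rightarrow> 'a set \<Rightarrow> 'a \<Rightarrow> complex"
  assumes F: "smeas2P F"
  shows "smeas2 (\<lambda>\<xi> \<zeta>. \<integral>t. F \<xi> \<zeta> t \<partial>lborel)"
  unfolding smeas2_def
proof (intro allI)
  fix k m
  have "(\<lambda>p. \<integral>t. F (cfg k (fst p)) (cfg m (snd p)) t \<partial>lborel) \<in> borel_measurable ((MM k :: (nat \<Rightarrow> 'a) measure) \<Otimes>\<^sub>M (MM m :: (nat \<Rightarrow> 'a) measure))"
    using lborel.borel_measurable_lebesgue_integral[of "\<lambda>p t. F (cfg k (fst p)) (cfg m (snd p)) t"] F[unfolded smeas2P_def, rule_format, of k m]
    by (simp add: split_beta')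
  then show "(\<lambda>(x, y). \<integral>t. F (cfg k x) (cfg m y) t \<partial>lborel) \<in> borel_measurable ((MM k :: (nat \<Rightarrow> 'a) measure) \<Otimes>\<^sub>M (MM m :: (nat \<Rightarrow> 'a) measure))"
    by (simp add: split_beta)
qed


lemma smeas_comp: "smeas F \<Longrightarrow> h \<in> borel_measurable borel \<Longrightarrow> smeas (\<lambda>\<xi>. h (F \<xi>))"
  unfolding smeas_def by (auto intro: measurable_compose)

lemma smeas_mult:
  fixes F G :: "'a::euclidean_space set \<Rightarrow> 'b::{second_countable_topology, real_normed_algebra}"
  shows "smeas F \<Longrightarrow> smeas G \<Longrightarrow> smeas (\<lambda>\<xi>. F \<xi> * G \<xi>)"
  unfolding smeas_def by (auto intro: borel_measurable_times)

lemma smeas_mult_enn: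
  fixes F G :: "'a::euclidean_space set \<Rightarrow> ennreal"
  shows "smeas F \<Longrightarrow> smeas G \<Longrightarrow> smeas (\<lambda>\<xi>. F \<xi> * G \<xi>)"
  unfolding smeas_def by (auto intro: borel_measurable_times_ennreal)

lemma smeas2_comp: "smeas2 F \<Longrightarrow> h \<in> borel_measurable borel \<Longrightarrow> smeas2 (\<lambda>\<xi> \<zeta>. h (F \<xi> \<zeta>))"
  unfolding smeas2_def by (auto intro: measurable_compose[of _ _ borel] simp: split_beta')

lemma smeas2_mult:
  fixes F G :: "'a::euclidean_space set \<Rightarrow> 'a set \<Rightarrow> 'b::{second_countable_topology, real_normed_algebra}"
  shows "smeas2 F \<Longrightarrow> smeas2 G \<Longrightarrow> smeas2 (\<lambda>\<xi> \<zeta>. F \<xi> \<zeta> * G \<xi> \<zeta>)"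
  unfolding smeas2_def split_beta' by (auto intro: borel_measurable_times)

lemma smeas2_mult_enn:
  fixes F G :: "'a::euclidean_space set \<Rightarrow> 'a set \<Rightarrow> ennreal"
  shows "smeas2 F \<Longrightarrow> smeas2 G \<Longrightarrow> smeas2 (\<lambda>\<xi> \<zeta>. F \<xi> \<zeta> * G \<xi> \<zeta>)"
  unfolding smeas2_def split_beta' by (auto intro: borel_measurable_times_ennreal)

lemma smeas2P_comp: "smeas2P F \<Longrightarrow> h \<in> borel_measurable borel \<Longrightarrow> smeas2P (\<lambda>\<xi> \<zeta> t. h (F \<xi> \<zeta> t))"
  unfolding smeas2P_def by (auto intro: measurable_compose[of _ _ borel])

lemma smeas2P_mult:
  fixes F G :: "'a::euclidean_space set \<Rightarrow> 'a set \<Rightarrow> 'a \<Rightarrow> 'b::{second_countable_topology, real_normed_algebra}"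
  shows "smeas2P F \<Longrightarrow> smeas2P G \<Longrightarrow> smeas2P (\<lambda>\<xi> \<zeta> t. F \<xi> \<zeta> t * G \<xi> \<zeta> t)"
  unfolding smeas2P_def by (auto intro: borel_measurable_times)

lemma smeasP_comp: "smeasP F \<Longrightarrow> h \<in> borel_measurable borel \<Longrightarrow> smeasP (\<lambda>\<xi> t. h (F \<xi> t))"
  unfolding smeasP_def by (auto intro: measurable_compose[of _ _ borel] simp: split_beta')

lemma smeasP_mult_enn:
  fixes F G :: "'a::euclidean_space set \<Rightarrow> 'a \<Rightarrow> ennreal"
  shows "smeasP F \<Longrightarrow> smeasP G \<Longrightarrow> smeasP (\<lambda>\<xi> t. F \<xi> t * G \<xi> t)"
  unfolding smeasP_def split_beta' by (auto intro: borel_measurable_times_ennreal)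

lemma smeasP_arg1:
  fixes g :: "'a::euclidean_space set \<Rightarrow> 'b::topological_space"
  assumes g: "smeas g"
  shows "smeasP (\<lambda>\<xi> t. g \<xi>)"
  unfolding smeasP_def
proof
  fix n
  show "(\<lambda>(x, t). g (cfg n x)) \<in> borel_measurable ((MM n :: (nat \<Rightarrow> 'a) measure) \<Otimes>\<^sub>M (lborel :: 'a measure))"
    using measurable_compose[OF measurable_fst[of "MM n :: (nat \<Rightarrow> 'a) measure" "lborel :: 'a measure"] g[unfolded smeas_def, rule_format, of n]]
    by (simp add: comp_def split_beta)
qed

lemma smeas_cardfun: "smeas (\<lambda>S::'a::euclidean_space set. h (card S))"
  unfolding smeas_def
proof
  fix n
  have "(\<lambda>x. h (card ((\<lambda>i. x i) ` {..<n}))) \<in> borel_measurable (MM n :: (nat \<Rightarrow> 'a) measure)"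
    by (rule fun_card_meas) (auto intro: proj_meas)
  then show "(\<lambda>x. h (card (cfg n x))) \<in> borel_measurable (MM n :: (nat \<Rightarrow> 'a) measure)"
    by (simp add: cfg_def)
qed

lemma smeas_LP_meas: "LP_meas G \<Longrightarrow> smeas G"
  unfolding LP_meas_def smeas_def by simp

lemma LP_meas_smeas: "smeas G \<Longrightarrow> LP_meas G"
  unfolding LP_meas_def smeas_def by simp

lemma Dtot_smeas:
  assumes d: "rate_meas d"
  shows "smeas (Dtot d)"
  unfolding smeas_def
proof
  fix n
  let ?M = "MM n :: (nat \<Rightarrow> 'a::euclidean_space) measure"
  have m: "(\<lambda>x. \<Sum>v\<in>(\<lambda>i. x i) ` {..<n}. d v ((\<lambda>i. x i) ` {..<n} - {v})) \<in> borel_measurable ?M"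
  proof (rule PS[where \<Psi>'="\<lambda>i x. d (x i) ((\<lambda>j. x j) ` {j\<in>{..<n}. x j \<noteq> x i})"])
    show "(\<lambda>x. x i) \<in> borel_measurable ?M" if "i \<in> {..<n}" for i using that by (intro proj_meas)
    show "(\<lambda>x. d (x i) ((\<lambda>j. x j) ` {j\<in>{..<n}. x j \<noteq> x i})) \<in> borel_measurable ?M" if i: "i \<in> {..<n}" for i
      by (rule R1f[OF d]) (use i in \<open>auto intro: proj_meas pred_neq\<close>)
    fix x :: "nat \<Rightarrow> 'a" and i
    show "d (x i) ((\<lambda>i. x i) ` {..<n} - {x i}) = d (x i) ((\<lambda>j. x j) ` {j\<in>{..<n}. x j \<noteq> x i})"
      by (rule arg_cong[where f="d (x i)"]) auto
  qed simp
  then show "(\<lambda>x. Dtot d (cfg n x)) \<in> borel_measurable ?M"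
    by (simp add: Dtot_def cfg_def)
qed

lemma SPLITm:
  fixes F :: "'a::euclidean_space set \<Rightarrow> 'a set \<Rightarrow> 'b::{second_countable_topology, topological_comm_monoid_add}"
  assumes F: "smeas2 F"
  shows "smeas (\<lambda>\<eta>. \<Sum>\<xi>\<in>Pow \<eta>. F \<xi> (\<eta> - \<xi>))"
  unfolding smeas_def
proof
  fix n
  let ?M = "MM n :: (nat \<Rightarrow> 'a::euclidean_space) measure"
  have m: "(\<lambda>x. \<Sum>S\<in>Pow ((\<lambda>i. x i) ` {..<n}). F S ((\<lambda>i. x i) ` {..<n} - S)) \<in> borel_measurable ?M"
  proof (rule PP[where \<Psi>'="\<lambda>I x. F ((\<lambda>i. x i) ` I) ((\<lambda>i. x i) ` ({..<n} - I))"])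
    show "(\<lambda>x. x i) \<in> borel_measurable ?M" if "i \<in> {..<n}" for i using that by (intro proj_meas)
    show "(\<lambda>x. F ((\<lambda>i. x i) ` I) ((\<lambda>i. x i) ` ({..<n} - I))) \<in> borel_measurable ?M" if I: "I \<subseteq> {..<n}" for I
      by (rule S21[OF F]) (use I in \<open>auto intro: proj_meas finite_subset\<close>)
    fix x :: "nat \<Rightarrow> 'a" and I assume "I \<subseteq> {..<n}" "sat (\<lambda>i. x i) {..<n} I"
    then show "F ((\<lambda>i. x i) ` I) ((\<lambda>i. x i) ` {..<n} - (\<lambda>i. x i) ` I) = F ((\<lambda>i. x i) ` I) ((\<lambda>i. x i) ` ({..<n} - I))"
      using sat_image_diff[of "\<lambda>i. x i" "{..<n}" I] by simp
  qed simp
  then show "(\<lambda>x. \<Sum>\<xi>\<in>Pow (cfg n x). F \<xi> (cfg n x - \<xi>)) \<in> borel_measurable ?M"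
    by (simp add: cfg_def)
qed

lemma smeas2P_fix:
  fixes F :: "'a::euclidean_space set \<Rightarrow> 'a set \<Rightarrow> 'a \<Rightarrow> 'b::topological_space"
  assumes F: "smeas2P F" and S: "finite S"
  shows "smeasP (F S)"
  unfolding smeasP_def
proof
  fix m
  obtain e where e: "bij_betw e {..<card S} S" using enum_finite[OF S] by blast
  define e' where "e' = (\<lambda>i\<in>{..<card S}. e i)"
  have S': "cfg (card S) e' = S" unfolding e'_def cfg_restrict using e by (simp add: bij_betw_def)
  have sp: "e' \<in> space (MM (card S) :: (nat \<Rightarrow> 'a) measure)" unfolding e'_def by (simp add: space_PiM)
  let ?M = "(MM m :: (nat \<Rightarrow> 'a) measure) \<Otimes>\<^sub>M (lborel :: 'a measure)"
  have mp: "(\<lambda>p. ((e', fst p), snd p)) \<in> measurable ?M (((MM (card S) :: (nat \<Rightarrow> 'a) measure) \<Otimes>\<^sub>M (MM m :: (nat \<Rightarrow> 'a) measure)) \<Otimes>\<^sub>M (lborel :: 'a measure))"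
    by (intro measurable_Pair measurable_const[OF sp] measurable_fst'' measurable_snd'' measurable_ident_sets) auto
  have "(\<lambda>p. (\<lambda>q. F (cfg (card S) (fst (fst q))) (cfg m (snd (fst q))) (snd q)) ((e', fst p), snd p)) \<in> borel_measurable ?M"
    by (rule measurable_compose[OF mp F[unfolded smeas2P_def, rule_format]])
  then show "(\<lambda>(z, t). F S (cfg m z) t) \<in> borel_measurable ?M"
    by (simp add: S' split_beta')
qed

lemma smeasP_fix:
  fixes F :: "'a::euclidean_space set \<Rightarrow> 'a \<Rightarrow> 'b::topological_space"
  assumes F: "smeasP F"
  shows "smeas (\<lambda>\<zeta>. F \<zeta> y)"
  unfolding smeas_def
proof
  fix m
  have mp: "(\<lambda>z. (z, y)) \<in> measurable (MM m :: (nat \<Rightarrow> 'a) measure) ((MM m :: (nat \<Rightarrow> 'a) measure) \<Otimes>\<^sub>M (lborel :: 'a measure))"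
    by (intro measurable_Pair measurable_const measurable_ident_sets) auto
  have "(\<lambda>z. (\<lambda>(x, t). F (cfg m x) t) (z, y)) \<in> borel_measurable (MM m :: (nat \<Rightarrow> 'a) measure)"
    by (rule measurable_compose[OF mp F[unfolded smeasP_def, rule_format]])
  then show "(\<lambda>z. F (cfg m z) y) \<in> borel_measurable (MM m :: (nat \<Rightarrow> 'a) measure)" by simp
qed

lemma LPm:
  fixes f :: "'n \<Rightarrow> 'a::euclidean_space set \<Rightarrow> ennreal"
  assumes f: "\<And>m. (\<lambda>q. f (fst q) (cfg m (snd q))) \<in> borel_measurable (N \<Otimes>\<^sub>M (MM m :: (nat \<Rightarrow> 'a) measure))"
  shows "(\<lambda>p. LP_nn (f p)) \<in> borel_measurable N"
  unfolding LP_nn_def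
proof (rule borel_measurable_suminf_order)
  fix m
  have "(\<lambda>p. \<integral>\<^sup>+z. f p (cfg m z) \<partial>(MM m :: (nat \<Rightarrow> 'a) measure)) \<in> borel_measurable N"
    using sigma_finite_measure.borel_measurable_nn_integral[OF sf_MM, of "\<lambda>p z. f p (cfg m z)" N m] f[of m]
    by (simp add: split_beta')
  then show "(\<lambda>p. ennreal (1 / fact m) * (\<integral>\<^sup>+z. f p (cfg m z) \<partial>(MM m :: (nat \<Rightarrow> 'a) measure))) \<in> borel_measurable N"
    by (intro borel_measurable_times_ennreal) auto
qed

lemma H_LP_smeasP:
  fixes r :: "'a::euclidean_space \<Rightarrow> 'a set \<Rightarrow> real" and C :: real
  assumes r: "rate_meas r"
  shows "smeasP (\<lambda>\<omega> t. LP_nn (\<lambda>\<zeta>. ennreal (\<bar>Kinv (\<lambda>\<zeta>'. r t (\<zeta>' \<union> (\<omega> - {t}))) \<zeta>\<bar> * C ^ card \<zeta>)))"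
  unfolding smeasP_def
proof
  fix n
  let ?N = "(MM n :: (nat \<Rightarrow> 'a) measure) \<Otimes>\<^sub>M (lborel :: 'a measure)"
  have "(\<lambda>p. LP_nn (\<lambda>\<zeta>. ennreal (\<bar>Kinv (\<lambda>\<zeta>'. r (snd p) (\<zeta>' \<union> (cfg n (fst p) - {snd p}))) \<zeta>\<bar> * C ^ card \<zeta>))) \<in> borel_measurable ?N"
  proof (rule LPm)
    fix m
    let ?M = "?N \<Otimes>\<^sub>M (MM m :: (nat \<Rightarrow> 'a) measure)"
    have k1: "(\<lambda>q. Kinv (\<lambda>\<zeta>'. r (famH n q n) (\<zeta>' \<union> (\<lambda>j. famH n q j) ` {j\<in>{..<n}. famH n q j \<noteq> famH n q n})) ((\<lambda>j. famH n q j) ` {j\<in>{Suc n..<Suc n+m}. True}))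
        \<in> borel_measurable ?M"
    proof (rule Kinv_meas[OF r, where PA="\<lambda>_ _. True"])
      show "(\<lambda>q. famH n q j) \<in> borel_measurable ?M" if "j \<in> {Suc n..<Suc n + m} \<union> {..<n}" for j
        using that by (intro famH_meas) auto
      show "(\<lambda>q. famH n q n) \<in> borel_measurable ?M" by (intro famH_meas) auto
      show "Measurable.pred ?M (\<lambda>q. famH n q j \<noteq> famH n q n)" if "j \<in> {..<n}" for j
        using that by (intro pred_neq famH_meas) auto
    qed auto
    have k2: "(\<lambda>q. C ^ card ((\<lambda>j. famH n q j) ` {Suc n..<Suc n+m})) \<in> borel_measurable ?M"
      by (rule fun_card_meas) (auto intro: famH_meas)
    have e: "Kinv (\<lambda>\<zeta>'. r (famH n q n) (\<zeta>' \<union> (\<lambda>j. famH n q j) ` {j\<in>{..<n}. famH n q j \<noteq> famH n q n})) ((\<lambda>j. famH n q j) ` {j\<in>{Suc n..<Suc n+m}. True})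
        = Kinv (\<lambda>\<zeta>'. r (snd (fst q)) (\<zeta>' \<union> (cfg n (fst (fst q)) - {snd (fst q)}))) (cfg m (snd q))" for q
    proof -
      have "(\<lambda>j. famH n q j) ` {j\<in>{..<n}. famH n q j \<noteq> famH n q n} = (\<lambda>j. famH n q j) ` {..<n} - {famH n q n}"
        by auto
      then show ?thesis by (simp only: simp_thms Collect_mem_eq famH_img1 famH_img2 famH_pt)
    qed
    have "(\<lambda>q. ennreal (\<bar>Kinv (\<lambda>\<zeta>'. r (famH n q n) (\<zeta>' \<union> (\<lambda>j. famH n q j) ` {j\<in>{..<n}. famH n q j \<noteq> famH n q n})) ((\<lambda>j. famH n q j) ` {j\<in>{Suc n..<Suc n+m}. True})\<bar>
        * C ^ card ((\<lambda>j. famH n q j) ` {Suc n..<Suc n+m}))) \<in> borel_measurable ?M"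
      using k1 k2 by measurable
    then show "(\<lambda>q. ennreal (\<bar>Kinv (\<lambda>\<zeta>'. r (snd (fst q)) (\<zeta>' \<union> (cfg n (fst (fst q)) - {snd (fst q)}))) (cfg m (snd q))\<bar> * C ^ card (cfg m (snd q))))
      \<in> borel_measurable ?M"
      by (simp only: e famH_img2)
  qed
  then show "(\<lambda>(x, t). LP_nn (\<lambda>\<zeta>. ennreal (\<bar>Kinv (\<lambda>\<zeta>'. r t (\<zeta>' \<union> (cfg n x - {t}))) \<zeta>\<bar> * C ^ card \<zeta>))) \<in> borel_measurable ?N"
    by (simp add: split_beta')
qed

lemma LP_swap:
  fixes f :: "'a::euclidean_space set \<Rightarrow> 'a \<Rightarrow> ennreal"
  assumes f: "smeasP f"
  shows "LP_nn (\<lambda>\<zeta>. \<integral>\<^sup>+t. f \<zeta> t \<partial>lborel) = (\<integral>\<^sup>+t. LP_nn (\<lambda>\<zeta>. f \<zeta> t) \<partial>lborel)"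
proof -
  have swap: "(\<integral>\<^sup>+z. (\<integral>\<^sup>+t. f (cfg m z) t \<partial>lborel) \<partial>(MM m :: (nat \<Rightarrow> 'a) measure))
      = (\<integral>\<^sup>+t. (\<integral>\<^sup>+z. f (cfg m z) t \<partial>(MM m :: (nat \<Rightarrow> 'a) measure)) \<partial>lborel)" for m
  proof -
    interpret pair_sigma_finite "MM m :: (nat \<Rightarrow> 'a) measure" "lborel :: 'a measure"
      unfolding pair_sigma_finite_def using sf_MM lborel.sigma_finite_measure_axioms by blast
    show ?thesis
      by (rule Fubini'[symmetric]) (use f[unfolded smeasP_def, rule_format, of m] in simp)
  qed
  have mt: "(\<lambda>t. ennreal (1 / fact m) * (\<integral>\<^sup>+z. f (cfg m z) t \<partial>(MM m :: (nat \<Rightarrow> 'a) measure))) \<in> borel_measurable lborel" for m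
  proof -
    have "(\<lambda>(t, z). f (cfg m z) t) \<in> borel_measurable ((lborel :: 'a measure) \<Otimes>\<^sub>M (MM m :: (nat \<Rightarrow> 'a) measure))"
      using f[unfolded smeasP_def, rule_format, of m] measurable_pair_swap_iff[of "\<lambda>(t, z). f (cfg m z) t" "lborel :: 'a measure" "MM m :: (nat \<Rightarrow> 'a) measure"]
      by (simp add: split_beta')
    then have "(\<lambda>t. \<integral>\<^sup>+z. f (cfg m z) t \<partial>(MM m :: (nat \<Rightarrow> 'a) measure)) \<in> borel_measurable lborel"
      using sigma_finite_measure.borel_measurable_nn_integral[OF sf_MM, of "\<lambda>t z. f (cfg m z) t" "lborel :: 'a measure" m] by simp
    then show ?thesis by (intro borel_measurable_times_ennreal) auto
  qed
  have "LP_nn (\<lambda>\<zeta>. \<integral>\<^sup>+t. f \<zeta> t \<partial>lborel) = (\<Sum>m. ennreal (1 / fact m) * (\<integral>\<^sup>+t. (\<integral>\<^sup>+z. f (cfg m z) t \<partial>(MM m :: (nat \<Rightarrow> 'a) measure)) \<partial>lborel))"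
    unfolding LP_nn_def swap ..
  also have "\<dots> = (\<Sum>m. (\<integral>\<^sup>+t. ennreal (1 / fact m) * (\<integral>\<^sup>+z. f (cfg m z) t \<partial>(MM m :: (nat \<Rightarrow> 'a) measure)) \<partial>lborel))"
  proof (rule suminf_cong)
    fix m
    have "(\<lambda>t. \<integral>\<^sup>+z. f (cfg m z) t \<partial>(MM m :: (nat \<Rightarrow> 'a) measure)) \<in> borel_measurable lborel"
    proof -
      have "(\<lambda>(t, z). f (cfg m z) t) \<in> borel_measurable ((lborel :: 'a measure) \<Otimes>\<^sub>M (MM m :: (nat \<Rightarrow> 'a) measure))"
        using f[unfolded smeasP_def, rule_format, of m] measurable_pair_swap_iff[of "\<lambda>(t, z). f (cfg m z) t" "lborel :: 'a measure" "MM m :: (nat \<Rightarrow> 'a) measure"]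
        by (simp add: split_beta')
      then show ?thesis
        using sigma_finite_measure.borel_measurable_nn_integral[OF sf_MM, of "\<lambda>t z. f (cfg m z) t" "lborel :: 'a measure" m] by simp
    qed
    then show "ennreal (1 / fact m) * (\<integral>\<^sup>+t. (\<integral>\<^sup>+z. f (cfg m z) t \<partial>(MM m :: (nat \<Rightarrow> 'a) measure)) \<partial>lborel)
      = (\<integral>\<^sup>+t. ennreal (1 / fact m) * (\<integral>\<^sup>+z. f (cfg m z) t \<partial>(MM m :: (nat \<Rightarrow> 'a) measure)) \<partial>lborel)"
      by (rule nn_integral_cmult[symmetric])
  qed
  also have "\<dots> = (\<integral>\<^sup>+t. (\<Sum>m. ennreal (1 / fact m) * (\<integral>\<^sup>+z. f (cfg m z) t \<partial>(MM m :: (nat \<Rightarrow> 'a) measure))) \<partial>lborel)"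
    by (rule nn_integral_suminf[symmetric]) (rule mt)
  also have "\<dots> = (\<integral>\<^sup>+t. LP_nn (\<lambda>\<zeta>. f \<zeta> t) \<partial>lborel)"
    unfolding LP_nn_def ..
  finally show ?thesis .
qed


definition Kds :: "('a \<Rightarrow> 'a set \<Rightarrow> real) \<Rightarrow> 'a set \<Rightarrow> 'a set \<Rightarrow> real" where
  "Kds d \<xi> \<zeta> = (\<Sum>y\<in>\<xi>. Kinv (\<lambda>\<zeta>'. d y (\<zeta>' \<union> (\<xi> - {y}))) \<zeta>)"

definition Kda :: "('a \<Rightarrow> 'a set \<Rightarrow> real) \<Rightarrow> 'a set \<Rightarrow> 'a set \<Rightarrow> real" where
  "Kda d \<xi> \<zeta> = (\<Sum>y\<in>\<xi>. \<bar>Kinv (\<lambda>\<zeta>'. d y (\<zeta>' \<union> (\<xi> - {y}))) \<zeta>\<bar>)"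

definition Kb :: "('a \<Rightarrow> 'a set \<Rightarrow> real) \<Rightarrow> 'a set \<Rightarrow> 'a set \<Rightarrow> 'a \<Rightarrow> real" where
  "Kb b \<xi> \<zeta> t = Kinv (\<lambda>\<zeta>'. b t (\<zeta>' \<union> \<xi>)) \<zeta>"

definition nz :: "nat \<Rightarrow> real" where
  "nz n = (if n = 0 then 0 else 1)"

definition Fd :: "real \<Rightarrow> ('a \<Rightarrow> 'a set \<Rightarrow> real) \<Rightarrow> ('a set \<Rightarrow> complex) \<Rightarrow> 'a set \<Rightarrow> 'a set \<Rightarrow> ennreal" where
  "Fd C d G \<xi> \<zeta> = ennreal (nz (card \<zeta>) * cmod (G \<xi>) * Kda d \<xi> \<zeta> * C ^ card \<xi> * C ^ card \<zeta>)"

definition Fb :: "real \<Rightarrow> ('a::euclidean_space \<Rightarrow> 'a set \<Rightarrow> real) \<Rightarrow> ('a set \<Rightarrow> complex) \<Rightarrow> 'a set \<Rightarrow> 'a set \<Rightarrow> ennreal" where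
  "Fb C b G \<xi> \<zeta> = (\<integral>\<^sup>+t. ennreal (cmod (G (insert t \<xi>)) * \<bar>Kb b \<xi> \<zeta> t\<bar> * C ^ card \<xi> * C ^ card \<zeta>) \<partial>lborel)"

lemma normint:
  fixes f :: "'a::euclidean_space \<Rightarrow> complex"
  assumes c: "c \<ge> 0"
  shows "ennreal (cmod (\<integral>t. f t \<partial>lborel) * c) \<le> (\<integral>\<^sup>+t. ennreal (cmod (f t) * c) \<partial>lborel)"
proof (cases "integrable lborel f")
  case True
  then have fm: "f \<in> borel_measurable lborel" by (rule borel_measurable_integrable)
  have "ennreal (cmod (\<integral>t. f t \<partial>lborel) * c) = ennreal (cmod (\<integral>t. f t \<partial>lborel)) * ennreal c"
    using c by (simp add: ennreal_mult)
  also have "\<dots> \<le> (\<integral>\<^sup>+t. ennreal (cmod (f t)) \<partial>lborel) * ennreal c"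
    by (rule mult_right_mono[OF integral_norm_bound_ennreal[OF True]]) simp
  also have "\<dots> = (\<integral>\<^sup>+t. ennreal (cmod (f t)) * ennreal c \<partial>lborel)"
    by (rule nn_integral_multc[symmetric]) (use fm in measurable)
  also have "\<dots> = (\<integral>\<^sup>+t. ennreal (cmod (f t) * c) \<partial>lborel)"
    using c by (simp add: ennreal_mult)
  finally show ?thesis .
next
  case False
  then show ?thesis by (simp add: not_integrable_integral_eq)
qed

lemma card_split: "finite \<eta> \<Longrightarrow> \<xi> \<subseteq> \<eta> \<Longrightarrow> (C::real) ^ card \<eta> = C ^ card \<xi> * C ^ card (\<eta> - \<xi>)"
  by (metis card_Diff_subset card_mono le_add_diff_inverse power_add finite_subset)

lemma PW1:
  fixes d b :: "'a::euclidean_space \<Rightarrow> 'a set \<Rightarrow> real" and G :: "'a set \<Rightarrow> complex"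
  assumes \<eta>: "finite \<eta>" and C: "C \<ge> 0"
  shows "ennreal (cmod (L1 d b G \<eta>) * C ^ card \<eta>)
    \<le> (\<Sum>\<xi>\<in>Pow \<eta>. Fd C d G \<xi> (\<eta> - \<xi>)) + (\<Sum>\<xi>\<in>Pow \<eta>. Fb C b G \<xi> (\<eta> - \<xi>))"
proof -
  define A where "A = (\<Sum>\<xi>\<in>{\<xi>. \<xi> \<subset> \<eta>}. G \<xi> * of_real (Kds d \<xi> (\<eta> - \<xi>)))"
  define B where "B = (\<Sum>\<xi>\<in>Pow \<eta>. \<integral>x. birth_integrand b G \<eta> \<xi> x \<partial>lborel)"
  define td where "td \<xi> = nz (card (\<eta> - \<xi>)) * cmod (G \<xi>) * Kda d \<xi> (\<eta> - \<xi>) * C ^ card \<xi> * C ^ card (\<eta> - \<xi>)" for \<xi>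
  have fP: "finite {\<xi>. \<xi> \<subset> \<eta>}" by (rule finite_subset[of _ "Pow \<eta>"]) (use \<eta> in auto)
  have L1eq: "L1 d b G \<eta> = - A + B" unfolding L1_def A_def B_def Kds_def ..
  have Cp: "0 \<le> C ^ card \<eta>" using C by simp
  have tdnn: "0 \<le> td \<xi>" for \<xi> unfolding td_def nz_def Kda_def using C by (auto intro!: mult_nonneg_nonneg sum_nonneg)
  have dA: "cmod A * C ^ card \<eta> \<le> (\<Sum>\<xi>\<in>Pow \<eta>. td \<xi>)"
  proof -
    have "cmod A \<le> (\<Sum>\<xi>\<in>{\<xi>. \<xi> \<subset> \<eta>}. cmod (G \<xi> * of_real (Kds d \<xi> (\<eta> - \<xi>))))"
      unfolding A_def by (rule norm_sum)
    then have "cmod A * C ^ card \<eta> \<le> (\<Sum>\<xi>\<in>{\<xi>. \<xi> \<subset> \<eta>}. cmod (G \<xi> * of_real (Kds d \<xi> (\<eta> - \<xi>)))) * C ^ card \<eta>"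
      by (rule mult_right_mono[OF _ Cp])
    also have "\<dots> = (\<Sum>\<xi>\<in>{\<xi>. \<xi> \<subset> \<eta>}. cmod (G \<xi> * of_real (Kds d \<xi> (\<eta> - \<xi>))) * C ^ card \<eta>)"
      by (rule sum_distrib_right)
    also have "\<dots> \<le> (\<Sum>\<xi>\<in>{\<xi>. \<xi> \<subset> \<eta>}. td \<xi>)"
    proof (rule sum_mono)
      fix \<xi> assume "\<xi> \<in> {\<xi>. \<xi> \<subset> \<eta>}"
      then have x: "\<xi> \<subset> \<eta>" by simp
      have fx: "finite \<xi>" using x \<eta> finite_subset by auto
      have ne: "card (\<eta> - \<xi>) \<noteq> 0" using x \<eta> by auto
      have "\<bar>Kds d \<xi> (\<eta> - \<xi>)\<bar> \<le> Kda d \<xi> (\<eta> - \<xi>)" unfolding Kds_def Kda_def by (rule sum_abs)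
      then have "cmod (G \<xi>) * \<bar>Kds d \<xi> (\<eta> - \<xi>)\<bar> * C ^ card \<eta> \<le> cmod (G \<xi>) * Kda d \<xi> (\<eta> - \<xi>) * C ^ card \<eta>"
        using Cp by (intro mult_right_mono mult_left_mono) auto
      also have "\<dots> = td \<xi>"
        unfolding td_def nz_def using ne card_split[OF \<eta>, of \<xi> C] x by auto
      finally show "cmod (G \<xi> * of_real (Kds d \<xi> (\<eta> - \<xi>))) * C ^ card \<eta> \<le> td \<xi>"
        by (simp add: norm_mult)
    qed
    also have "\<dots> \<le> (\<Sum>\<xi>\<in>Pow \<eta>. td \<xi>)"
      by (rule sum_mono2) (use \<eta> tdnn in auto)
    finally show ?thesis .
  qed
  have dB: "ennreal (cmod B * C ^ card \<eta>) \<le> (\<Sum>\<xi>\<in>Pow \<eta>. Fb C b G \<xi> (\<eta> - \<xi>))"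
  proof -
    have "cmod B * C ^ card \<eta> \<le> (\<Sum>\<xi>\<in>Pow \<eta>. cmod (\<integral>x. birth_integrand b G \<eta> \<xi> x \<partial>lborel)) * C ^ card \<eta>"
      unfolding B_def by (rule mult_right_mono[OF norm_sum Cp])
    also have "\<dots> = (\<Sum>\<xi>\<in>Pow \<eta>. cmod (\<integral>x. birth_integrand b G \<eta> \<xi> x \<partial>lborel) * C ^ card \<eta>)"
      by (rule sum_distrib_right)
    finally have "ennreal (cmod B * C ^ card \<eta>) \<le> ennreal (\<Sum>\<xi>\<in>Pow \<eta>. cmod (\<integral>x. birth_integrand b G \<eta> \<xi> x \<partial>lborel) * C ^ card \<eta>)"
      by (rule ennreal_leI)
    also have "\<dots> = (\<Sum>\<xi>\<in>Pow \<eta>. ennreal (cmod (\<integral>x. birth_integrand b G \<eta> \<xi> x \<partial>lborel) * C ^ card \<eta>))"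
      by (rule sum_ennreal[symmetric]) (use Cp in auto)
    also have "\<dots> \<le> (\<Sum>\<xi>\<in>Pow \<eta>. Fb C b G \<xi> (\<eta> - \<xi>))"
    proof (rule sum_mono)
      fix \<xi> assume x: "\<xi> \<in> Pow \<eta>"
      have "ennreal (cmod (\<integral>x. birth_integrand b G \<eta> \<xi> x \<partial>lborel) * C ^ card \<eta>)
          \<le> (\<integral>\<^sup>+t. ennreal (cmod (birth_integrand b G \<eta> \<xi> t) * C ^ card \<eta>) \<partial>lborel)"
        by (rule normint[OF Cp])
      also have "\<dots> = Fb C b G \<xi> (\<eta> - \<xi>)"
        unfolding Fb_def birth_integrand_def Kb_def
        using card_split[OF \<eta>, of \<xi> C] x by (simp add: norm_mult mult.assoc)
      finally show "ennreal (cmod (\<integral>x. birth_integrand b G \<eta> \<xi> x \<partial>lborel) * C ^ card \<eta>) \<le> Fb C b G \<xi> (\<eta> - \<xi>)" .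
    qed
    finally show ?thesis .
  qed
  have "cmod (L1 d b G \<eta>) * C ^ card \<eta> \<le> (cmod A + cmod B) * C ^ card \<eta>"
    unfolding L1eq by (rule mult_right_mono[OF _ Cp]) (metis norm_minus_cancel norm_triangle_ineq)
  then have "ennreal (cmod (L1 d b G \<eta>) * C ^ card \<eta>) \<le> ennreal (cmod A * C ^ card \<eta>) + ennreal (cmod B * C ^ card \<eta>)"
    using Cp by (simp add: distrib_right ennreal_plus[symmetric] del: ennreal_plus)
  also have "\<dots> \<le> ennreal (\<Sum>\<xi>\<in>Pow \<eta>. td \<xi>) + (\<Sum>\<xi>\<in>Pow \<eta>. Fb C b G \<xi> (\<eta> - \<xi>))"
    by (intro add_mono ennreal_leI dA dB)
  also have "ennreal (\<Sum>\<xi>\<in>Pow \<eta>. td \<xi>) = (\<Sum>\<xi>\<in>Pow \<eta>. Fd C d G \<xi> (\<eta> - \<xi>))"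
    unfolding Fd_def td_def by (rule sum_ennreal[symmetric]) (use tdnn[unfolded td_def] in auto)
  finally show ?thesis .
qed


lemma Kda_smeas2: "rate_meas d \<Longrightarrow> smeas2 (Kda d)"
proof -
  assume d: "rate_meas d"
  have "smeas2 (\<lambda>\<xi> \<zeta>. \<Sum>y\<in>\<xi>. abs (Kinv (\<lambda>\<zeta>'. d y (\<zeta>' \<union> (\<xi> - {y}))) \<zeta>))"
    by (rule Kd_smeas2[OF d]) measurable
  then show ?thesis unfolding Kda_def[abs_def] .
qed

lemma Kds_smeas2: "rate_meas d \<Longrightarrow> smeas2 (Kds d)"
proof -
  assume d: "rate_meas d"
  have "smeas2 (\<lambda>\<xi> \<zeta>. \<Sum>y\<in>\<xi>. (\<lambda>x. x) (Kinv (\<lambda>\<zeta>'. d y (\<zeta>' \<union> (\<xi> - {y}))) \<zeta>))"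
    by (rule Kd_smeas2[OF d]) measurable
  then show ?thesis unfolding Kds_def[abs_def] by simp
qed

lemma Kb_smeas2P': "rate_meas b \<Longrightarrow> smeas2P (Kb b)"
  using Kb_smeas2P[of b] unfolding Kb_def[abs_def] by simp

lemma Fd_smeas2:
  fixes d :: "'a::euclidean_space \<Rightarrow> 'a set \<Rightarrow> real"
  assumes d: "rate_meas d" and G: "smeas G"
  shows "smeas2 (Fd C d G)"
proof -
  have a: "smeas2 (\<lambda>\<xi> \<zeta>::'a set. nz (card \<zeta>))" by (rule smeas2_arg2[OF smeas_cardfun])
  have b: "smeas2 (\<lambda>\<xi> \<zeta>::'a set. cmod (G \<xi>))" by (rule smeas2_arg1[OF smeas_comp[OF G]]) measurable
  have c: "smeas2 (\<lambda>\<xi> \<zeta>::'a set. C ^ card \<xi>)" by (rule smeas2_arg1[OF smeas_cardfun])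
  have e: "smeas2 (\<lambda>\<xi>::'a set. \<lambda>\<zeta>. C ^ card \<zeta>)" by (rule smeas2_arg2[OF smeas_cardfun])
  have "smeas2 (\<lambda>\<xi> \<zeta>. nz (card \<zeta>) * cmod (G \<xi>) * Kda d \<xi> \<zeta> * C ^ card \<xi> * C ^ card \<zeta>)"
    by (intro smeas2_mult a b c e Kda_smeas2[OF d])
  then have "smeas2 (\<lambda>\<xi> \<zeta>. ennreal (nz (card \<zeta>) * cmod (G \<xi>) * Kda d \<xi> \<zeta> * C ^ card \<xi> * C ^ card \<zeta>))"
    by (rule smeas2_comp) measurable
  then show ?thesis unfolding Fd_def[abs_def] .
qed

lemma Fb_int_smeas2P:
  fixes b :: "'a::euclidean_space \<Rightarrow> 'a set \<Rightarrow> real"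
  assumes b: "rate_meas b" and G: "smeas G"
  shows "smeas2P (\<lambda>\<xi> \<zeta> t. ennreal (cmod (G (insert t \<xi>)) * \<bar>Kb b \<xi> \<zeta> t\<bar> * C ^ card \<xi> * C ^ card \<zeta>))"
proof -
  have a: "smeas2P (\<lambda>\<xi> \<zeta> t::'a. cmod (G (insert t \<xi>)))" by (rule smeas2P_comp[OF ins_smeas2P[OF G]]) measurable
  have k: "smeas2P (\<lambda>\<xi> \<zeta> t. \<bar>Kb b \<xi> \<zeta> t\<bar>)" by (rule smeas2P_comp[OF Kb_smeas2P'[OF b]]) measurable
  have c: "smeas2P (\<lambda>\<xi> \<zeta> t::'a. C ^ card \<xi>)" by (rule smeas2P_arg1[OF smeas_cardfun])
  have e: "smeas2P (\<lambda>\<xi>::'a set. \<lambda>\<zeta> t::'a. C ^ card \<zeta>)" by (rule smeas2P_arg2[OF smeas_cardfun])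
  have "smeas2P (\<lambda>\<xi> \<zeta> t. cmod (G (insert t \<xi>)) * \<bar>Kb b \<xi> \<zeta> t\<bar> * C ^ card \<xi> * C ^ card \<zeta>)"
    by (intro smeas2P_mult a k c e)
  then show ?thesis by (rule smeas2P_comp) measurable
qed

lemma Fb_smeas2:
  assumes b: "rate_meas b" and G: "smeas G"
  shows "smeas2 (Fb C b G)"
  using smeas2P_nnint[OF Fb_int_smeas2P[OF b G, of C]] unfolding Fb_def[abs_def] .

definition Fdc :: "('a \<Rightarrow> 'a set \<Rightarrow> real) \<Rightarrow> ('a set \<Rightarrow> complex) \<Rightarrow> 'a set \<Rightarrow> 'a set \<Rightarrow> complex" where
  "Fdc d G \<xi> \<zeta> = - (of_real (nz (card \<zeta>)) * G \<xi> * of_real (Kds d \<xi> \<zeta>))"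

definition Fbc :: "('a::euclidean_space \<Rightarrow> 'a set \<Rightarrow> real) \<Rightarrow> ('a set \<Rightarrow> complex) \<Rightarrow> 'a set \<Rightarrow> 'a set \<Rightarrow> complex" where
  "Fbc b G \<xi> \<zeta> = (\<integral>t. G (insert t \<xi>) * of_real (Kb b \<xi> \<zeta> t) \<partial>lborel)"

lemma Fdc_smeas2:
  fixes d :: "'a::euclidean_space \<Rightarrow> 'a set \<Rightarrow> real"
  assumes d: "rate_meas d" and G: "smeas G"
  shows "smeas2 (Fdc d G)"
proof -
  have a: "smeas2 (\<lambda>\<xi> \<zeta>::'a set. complex_of_real (nz (card \<zeta>)))" by (rule smeas2_arg2[OF smeas_cardfun])
  have b: "smeas2 (\<lambda>\<xi> \<zeta>::'a set. G \<xi>)" by (rule smeas2_arg1[OF G])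
  have k: "smeas2 (\<lambda>\<xi> \<zeta>. complex_of_real (Kds d \<xi> \<zeta>))" by (rule smeas2_comp[OF Kds_smeas2[OF d]]) measurable
  have "smeas2 (\<lambda>\<xi> \<zeta>. of_real (nz (card \<zeta>)) * G \<xi> * of_real (Kds d \<xi> \<zeta>))"
    by (intro smeas2_mult a b k)
  then have "smeas2 (\<lambda>\<xi> \<zeta>. - (of_real (nz (card \<zeta>)) * G \<xi> * of_real (Kds d \<xi> \<zeta>)))"
    by (rule smeas2_comp) measurable
  then show ?thesis unfolding Fdc_def[abs_def] .
qed

lemma Fbc_smeas2:
  fixes b :: "'a::euclidean_space \<Rightarrow> 'a set \<Rightarrow> real"
  assumes b: "rate_meas b" and G: "smeas G"
  shows "smeas2 (Fbc b G)"
proof -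
  have k: "smeas2P (\<lambda>\<xi> \<zeta> t. complex_of_real (Kb b \<xi> \<zeta> t))" by (rule smeas2P_comp[OF Kb_smeas2P'[OF b]]) measurable
  have "smeas2P (\<lambda>\<xi> \<zeta> t. G (insert t \<xi>) * complex_of_real (Kb b \<xi> \<zeta> t))"
    by (intro smeas2P_mult ins_smeas2P[OF G] k)
  from smeas2P_int[OF this] show ?thesis unfolding Fbc_def[abs_def] .
qed

lemma L1_eq:
  assumes \<eta>: "finite \<eta>"
  shows "L1 d b G \<eta> = (\<Sum>\<xi>\<in>Pow \<eta>. Fdc d G \<xi> (\<eta> - \<xi>)) + (\<Sum>\<xi>\<in>Pow \<eta>. Fbc b G \<xi> (\<eta> - \<xi>))"
proof -
  have P: "Pow \<eta> = insert \<eta> {\<xi>. \<xi> \<subset> \<eta>}" by auto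
  have fP: "finite {\<xi>. \<xi> \<subset> \<eta>}" by (rule finite_subset[of _ "Pow \<eta>"]) (use \<eta> in auto)
  have "(\<Sum>\<xi>\<in>Pow \<eta>. Fdc d G \<xi> (\<eta> - \<xi>)) = Fdc d G \<eta> (\<eta> - \<eta>) + (\<Sum>\<xi>\<in>{\<xi>. \<xi> \<subset> \<eta>}. Fdc d G \<xi> (\<eta> - \<xi>))"
    unfolding P by (rule sum.insert[OF fP]) simp
  also have "Fdc d G \<eta> (\<eta> - \<eta>) = 0" unfolding Fdc_def nz_def by simp
  also have "(\<Sum>\<xi>\<in>{\<xi>. \<xi> \<subset> \<eta>}. Fdc d G \<xi> (\<eta> - \<xi>)) = - (\<Sum>\<xi>\<in>{\<xi>. \<xi> \<subset> \<eta>}. G \<xi> * of_real (Kds d \<xi> (\<eta> - \<xi>)))"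
  proof -
    have "Fdc d G \<xi> (\<eta> - \<xi>) = - (G \<xi> * of_real (Kds d \<xi> (\<eta> - \<xi>)))" if "\<xi> \<in> {\<xi>. \<xi> \<subset> \<eta>}" for \<xi>
    proof -
      have "card (\<eta> - \<xi>) \<noteq> 0" using that \<eta> by auto
      then show ?thesis unfolding Fdc_def nz_def by simp
    qed
    then show ?thesis by (simp add: sum_negf)
  qed
  finally show ?thesis unfolding L1_def Kds_def Fbc_def Kb_def birth_integrand_def by simp
qed

lemma L1_meas:
  assumes d: "rate_meas d" and b: "rate_meas b" and G: "LP_meas G"
  shows "LP_meas (L1 d b G)"
proof -
  have G': "smeas G" by (rule smeas_LP_meas[OF G])
  have s1: "smeas (\<lambda>\<eta>. \<Sum>\<xi>\<in>Pow \<eta>. Fdc d G \<xi> (\<eta> - \<xi>))" by (rule SPLITm[OF Fdc_smeas2[OF d G']])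
  have s2: "smeas (\<lambda>\<eta>. \<Sum>\<xi>\<in>Pow \<eta>. Fbc b G \<xi> (\<eta> - \<xi>))" by (rule SPLITm[OF Fbc_smeas2[OF b G']])
  have "smeas (\<lambda>\<eta>. (\<Sum>\<xi>\<in>Pow \<eta>. Fdc d G \<xi> (\<eta> - \<xi>)) + (\<Sum>\<xi>\<in>Pow \<eta>. Fbc b G \<xi> (\<eta> - \<xi>)))"
    using s1 s2 unfolding smeas_def by (auto intro: borel_measurable_add)
  then show ?thesis unfolding smeas_def LP_meas_def by (simp add: L1_eq)
qed


lemma smeasP_fix2:
  fixes F :: "'a::euclidean_space set \<Rightarrow> 'a \<Rightarrow> 'b::topological_space"
  assumes F: "smeasP F" and S: "finite S"
  shows "(\<lambda>t. F S t) \<in> borel_measurable lborel"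
proof -
  obtain e where e: "bij_betw e {..<card S} S" using enum_finite[OF S] by blast
  define e' where "e' = (\<lambda>i\<in>{..<card S}. e i)"
  have S': "cfg (card S) e' = S" unfolding e'_def cfg_restrict using e by (simp add: bij_betw_def)
  have sp: "e' \<in> space (MM (card S) :: (nat \<Rightarrow> 'a) measure)" unfolding e'_def by (simp add: space_PiM)
  have mp: "(\<lambda>t. (e', t)) \<in> measurable (lborel :: 'a measure) ((MM (card S) :: (nat \<Rightarrow> 'a) measure) \<Otimes>\<^sub>M (lborel :: 'a measure))"
    by (intro measurable_Pair measurable_const[OF sp] measurable_ident_sets) auto
  have "(\<lambda>t. (\<lambda>(x, t). F (cfg (card S) x) t) (e', t)) \<in> borel_measurable (lborel :: 'a measure)"
    by (rule measurable_compose[OF mp F[unfolded smeasP_def, rule_format]])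
  then show ?thesis by (simp add: S')
qed

lemma Kinv_empty[simp]: "Kinv f {} = f {}"
  by (simp add: Kinv_def)

lemma K_fix_smeas:
  fixes r :: "'a::euclidean_space \<Rightarrow> 'a set \<Rightarrow> real"
  assumes r: "rate_meas r" and S: "finite S"
  shows "smeas (\<lambda>\<zeta>. Kinv (\<lambda>\<zeta>'. r y (\<zeta>' \<union> S)) \<zeta>)"
  using smeasP_fix[OF smeas2P_fix[OF Kb_smeas2P[OF r] S], of y] .

lemma dpart_xi:
  fixes d :: "'a::euclidean_space \<Rightarrow> 'a set \<Rightarrow> real" and G :: "'a set \<Rightarrow> complex"
  assumes d_nonneg: "\<And>x \<eta>. 0 \<le> d x \<eta>" and d: "rate_meas d" and C: "C \<ge> 0" and a1: "a1 \<ge> 1"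
    and \<xi>: "finite \<xi>"
    and hyp: "(\<Sum>x\<in>\<xi>. LP_nn (\<lambda>\<eta>. ennreal (\<bar>Kinv (\<lambda>\<zeta>. d x (\<zeta> \<union> (\<xi> - {x}))) \<eta>\<bar> * C ^ card \<eta>)))
        \<le> ennreal (a1 * Dtot d \<xi>)"
  shows "LP_nn (Fd C d G \<xi>) \<le> ennreal ((a1 - 1) * (Dtot d \<xi> * (cmod (G \<xi>) * C ^ card \<xi>)))"
proof -
  define k where "k y \<zeta> = \<bar>Kinv (\<lambda>\<zeta>'. d y (\<zeta>' \<union> (\<xi> - {y}))) \<zeta>\<bar> * C ^ card \<zeta>" for y \<zeta>
  have knn: "0 \<le> k y \<zeta>" for y \<zeta> unfolding k_def using C by simp
  have ks: "smeas (\<lambda>\<zeta>. ennreal (k y \<zeta>))" for y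
  proof -
    have "smeas (\<lambda>\<zeta>. \<bar>Kinv (\<lambda>\<zeta>'. d y (\<zeta>' \<union> (\<xi> - {y}))) \<zeta>\<bar>)"
      by (rule smeas_comp[OF K_fix_smeas[OF d]]) (use \<xi> in auto)
    then have "smeas (\<lambda>\<zeta>. \<bar>Kinv (\<lambda>\<zeta>'. d y (\<zeta>' \<union> (\<xi> - {y}))) \<zeta>\<bar> * C ^ card \<zeta>)"
      by (intro smeas_mult smeas_cardfun)
    then show ?thesis unfolding k_def by (rule smeas_comp) measurable
  qed
  have ks2: "smeas (\<lambda>\<zeta>. ennreal (nz (card \<zeta>) * k y \<zeta>))" for y
  proof -
    have "smeas (\<lambda>\<zeta>. ennreal (nz (card \<zeta>)) * ennreal (k y \<zeta>))"
      by (intro smeas_mult_enn ks smeas_cardfun)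
    moreover have "ennreal (nz (card \<zeta>)) * ennreal (k y \<zeta>) = ennreal (nz (card \<zeta>) * k y \<zeta>)" for \<zeta>
      using knn by (simp add: ennreal_mult nz_def)
    ultimately show ?thesis by simp
  qed
  define X where "X y = LP_nn (\<lambda>\<zeta>. ennreal (nz (card \<zeta>) * k y \<zeta>))" for y
  have Fdeq: "LP_nn (Fd C d G \<xi>) = ennreal (cmod (G \<xi>) * C ^ card \<xi>) * (\<Sum>y\<in>\<xi>. X y)"
  proof -
    have "LP_nn (Fd C d G \<xi>) = LP_nn (\<lambda>\<zeta>. ennreal (cmod (G \<xi>) * C ^ card \<xi>) * (\<Sum>y\<in>\<xi>. ennreal (nz (card \<zeta>) * k y \<zeta>)))"
    proof (rule LP_cong)
      fix \<zeta> :: "'a set"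
      have nn: "0 \<le> nz (card \<zeta>)" by (simp add: nz_def)
      have "(\<Sum>y\<in>\<xi>. ennreal (nz (card \<zeta>) * k y \<zeta>)) = ennreal (\<Sum>y\<in>\<xi>. nz (card \<zeta>) * k y \<zeta>)"
        using knn nn by (intro sum_ennreal) auto
      also have "(\<Sum>y\<in>\<xi>. nz (card \<zeta>) * k y \<zeta>) = nz (card \<zeta>) * Kda d \<xi> \<zeta> * C ^ card \<zeta>"
        unfolding k_def Kda_def by (simp add: sum_distrib_left sum_distrib_right mult.assoc)
      finally have "ennreal (cmod (G \<xi>) * C ^ card \<xi>) * (\<Sum>y\<in>\<xi>. ennreal (nz (card \<zeta>) * k y \<zeta>))
          = ennreal (cmod (G \<xi>) * C ^ card \<xi>) * ennreal (nz (card \<zeta>) * Kda d \<xi> \<zeta> * C ^ card \<zeta>)" by simp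
      also have "\<dots> = ennreal (cmod (G \<xi>) * C ^ card \<xi> * (nz (card \<zeta>) * Kda d \<xi> \<zeta> * C ^ card \<zeta>))"
      proof (rule ennreal_mult[symmetric])
        have "0 \<le> Kda d \<xi> \<zeta>" unfolding Kda_def by (simp add: sum_nonneg)
        then show "0 \<le> nz (card \<zeta>) * Kda d \<xi> \<zeta> * C ^ card \<zeta>" using C nn by simp
      qed (use C in simp)
      also have "\<dots> = Fd C d G \<xi> \<zeta>" unfolding Fd_def by (simp add: ac_simps)
      finally show "Fd C d G \<xi> \<zeta> = ennreal (cmod (G \<xi>) * C ^ card \<xi>) * (\<Sum>y\<in>\<xi>. ennreal (nz (card \<zeta>) * k y \<zeta>))" ..
    qed
    also have "\<dots> = ennreal (cmod (G \<xi>) * C ^ card \<xi>) * LP_nn (\<lambda>\<zeta>. \<Sum>y\<in>\<xi>. ennreal (nz (card \<zeta>) * k y \<zeta>))"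
      by (rule LP_cmult) (intro smeas_sum ks2)
    also have "LP_nn (\<lambda>\<zeta>. \<Sum>y\<in>\<xi>. ennreal (nz (card \<zeta>) * k y \<zeta>)) = (\<Sum>y\<in>\<xi>. X y)"
      unfolding X_def by (rule LP_sum[OF \<xi>]) (rule ks2)
    finally show ?thesis .
  qed
  have Xy: "LP_nn (\<lambda>\<zeta>. ennreal (k y \<zeta>)) = ennreal (d y (\<xi> - {y})) + X y" for y
  proof -
    have "LP_nn (\<lambda>\<zeta>. ennreal (k y \<zeta>)) = ennreal (k y {}) + LP_nn (\<lambda>\<zeta>. if \<zeta> = {} then 0 else ennreal (k y \<zeta>))"
      by (rule LP_head)
    also have "k y {} = d y (\<xi> - {y})" unfolding k_def using d_nonneg by simp
    also have "LP_nn (\<lambda>\<zeta>. if \<zeta> = {} then 0 else ennreal (k y \<zeta>)) = X y"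
      unfolding X_def by (rule LP_cong) (auto simp: nz_def)
    finally show ?thesis .
  qed
  have Dnn: "0 \<le> Dtot d \<xi>" unfolding Dtot_def using d_nonneg by (simp add: sum_nonneg)
  have "(\<Sum>y\<in>\<xi>. X y) + ennreal (Dtot d \<xi>) = (\<Sum>y\<in>\<xi>. LP_nn (\<lambda>\<zeta>. ennreal (k y \<zeta>)))"
  proof -
    have "ennreal (Dtot d \<xi>) = (\<Sum>y\<in>\<xi>. ennreal (d y (\<xi> - {y})))"
      unfolding Dtot_def using d_nonneg by (intro sum_ennreal[symmetric]) auto
    moreover have "(\<Sum>y\<in>\<xi>. LP_nn (\<lambda>\<zeta>. ennreal (k y \<zeta>))) = (\<Sum>y\<in>\<xi>. ennreal (d y (\<xi> - {y}))) + (\<Sum>y\<in>\<xi>. X y)"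
      by (simp only: Xy sum.distrib)
    ultimately show ?thesis by (simp only: add.commute)
  qed
  also have "\<dots> \<le> ennreal (a1 * Dtot d \<xi>)" using hyp unfolding k_def .
  also have "\<dots> = ennreal ((a1 - 1) * Dtot d \<xi>) + ennreal (Dtot d \<xi>)"
  proof -
    have "a1 * Dtot d \<xi> = (a1 - 1) * Dtot d \<xi> + Dtot d \<xi>" by (simp add: algebra_simps)
    moreover have "ennreal ((a1 - 1) * Dtot d \<xi> + Dtot d \<xi>) = ennreal ((a1 - 1) * Dtot d \<xi>) + ennreal (Dtot d \<xi>)"
      by (rule ennreal_plus) (use a1 Dnn in auto)
    ultimately show ?thesis by simp
  qed
  finally have le: "ennreal (Dtot d \<xi>) + (\<Sum>y\<in>\<xi>. X y) \<le> ennreal (Dtot d \<xi>) + ennreal ((a1 - 1) * Dtot d \<xi>)"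
    by (simp only: add.commute)
  have "(\<Sum>y\<in>\<xi>. X y) \<le> ennreal ((a1 - 1) * Dtot d \<xi>)"
    using le unfolding ennreal_add_left_cancel_le by simp
  then have "LP_nn (Fd C d G \<xi>) \<le> ennreal (cmod (G \<xi>) * C ^ card \<xi>) * ennreal ((a1 - 1) * Dtot d \<xi>)"
    unfolding Fdeq by (rule mult_left_mono) simp
  also have "\<dots> = ennreal ((a1 - 1) * (Dtot d \<xi> * (cmod (G \<xi>) * C ^ card \<xi>)))"
    using C Dnn a1 by (subst ennreal_mult[symmetric]) (auto simp: ac_simps)
  finally show ?thesis .
qed


definition Hm :: "real \<Rightarrow> ('a set \<Rightarrow> complex) \<Rightarrow> ('a::euclidean_space \<Rightarrow> 'a set \<Rightarrow> real) \<Rightarrow> 'a set \<Rightarrow> 'a \<Rightarrow> ennreal" where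
  "Hm C G b \<omega> t = ennreal (cmod (G \<omega>) * C ^ (card \<omega> - 1)) *
     LP_nn (\<lambda>\<zeta>. ennreal (\<bar>Kinv (\<lambda>\<zeta>'. b t (\<zeta>' \<union> (\<omega> - {t}))) \<zeta>\<bar> * C ^ card \<zeta>))"

lemma Hm_smeasP:
  assumes b: "rate_meas b" and G: "smeas G"
  shows "smeasP (Hm C G b)"
proof -
  have s1: "smeas (\<lambda>\<omega>. cmod (G \<omega>))" by (rule smeas_comp[OF G]) measurable
  have s2: "smeas (\<lambda>\<omega>::'a set. C ^ (card \<omega> - 1))" by (rule smeas_cardfun)
  have "smeas (\<lambda>\<omega>. cmod (G \<omega>) * C ^ (card \<omega> - 1))" by (rule smeas_mult[OF s1 s2])
  then have s3: "smeas (\<lambda>\<omega>. ennreal (cmod (G \<omega>) * C ^ (card \<omega> - 1)))" by (rule smeas_comp) measurable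
  show ?thesis
    unfolding Hm_def[abs_def] by (rule smeasP_mult_enn[OF smeasP_arg1[OF s3] H_LP_smeasP[OF b]])
qed

lemma Kb_fix_smeas_enn:
  fixes b :: "'a::euclidean_space \<Rightarrow> 'a set \<Rightarrow> real"
  assumes b: "rate_meas b" and \<xi>: "finite \<xi>"
  shows "smeas (\<lambda>\<zeta>. ennreal (\<bar>Kb b \<xi> \<zeta> t\<bar> * C ^ card \<zeta>))"
proof -
  have "smeas (\<lambda>\<zeta>. \<bar>Kinv (\<lambda>\<zeta>'. b t (\<zeta>' \<union> \<xi>)) \<zeta>\<bar>)"
    by (rule smeas_comp[OF K_fix_smeas[OF b \<xi>]]) measurable
  then have "smeas (\<lambda>\<zeta>. \<bar>Kinv (\<lambda>\<zeta>'. b t (\<zeta>' \<union> \<xi>)) \<zeta>\<bar> * C ^ card \<zeta>)"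
    by (intro smeas_mult smeas_cardfun)
  then show ?thesis unfolding Kb_def by (rule smeas_comp) measurable
qed

lemma AE_notin_finite:
  assumes "finite (\<xi> :: 'a::euclidean_space set)"
  shows "AE t in lborel. t \<notin> \<xi>"
proof -
  have "AE t in lborel. \<forall>s\<in>\<xi>. t \<noteq> s"
    by (rule AE_finite_allI[OF assms]) (rule AE_lborel_singleton)
  then show ?thesis by eventually_elim auto
qed

lemma bpart_xi:
  fixes b :: "'a::euclidean_space \<Rightarrow> 'a set \<Rightarrow> real" and G :: "'a set \<Rightarrow> complex"
  assumes b: "rate_meas b" and G: "smeas G" and C: "C \<ge> 0" and \<xi>: "finite \<xi>"
  shows "LP_nn (Fb C b G \<xi>) = (\<integral>\<^sup>+t. Hm C G b (insert t \<xi>) t \<partial>lborel)"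
proof -
  define f where "f \<zeta> t = ennreal (cmod (G (insert t \<xi>)) * \<bar>Kb b \<xi> \<zeta> t\<bar> * C ^ card \<xi> * C ^ card \<zeta>)" for \<zeta> t
  have fs: "smeasP f"
    using smeas2P_fix[OF Fb_int_smeas2P[OF b G, of C] \<xi>] unfolding f_def .
  have "LP_nn (Fb C b G \<xi>) = LP_nn (\<lambda>\<zeta>. \<integral>\<^sup>+t. f \<zeta> t \<partial>lborel)"
    unfolding Fb_def f_def ..
  also have "\<dots> = (\<integral>\<^sup>+t. LP_nn (\<lambda>\<zeta>. f \<zeta> t) \<partial>lborel)" by (rule LP_swap[OF fs])
  also have "\<dots> = (\<integral>\<^sup>+t. Hm C G b (insert t \<xi>) t \<partial>lborel)"
  proof (rule nn_integral_cong_AE)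
    show "AE t in lborel. LP_nn (\<lambda>\<zeta>. f \<zeta> t) = Hm C G b (insert t \<xi>) t"
      using AE_notin_finite[OF \<xi>]
    proof eventually_elim
      case (elim t)
      have "LP_nn (\<lambda>\<zeta>. f \<zeta> t) = LP_nn (\<lambda>\<zeta>. ennreal (cmod (G (insert t \<xi>)) * C ^ card \<xi>) * ennreal (\<bar>Kb b \<xi> \<zeta> t\<bar> * C ^ card \<zeta>))"
      proof (rule LP_cong)
        fix \<zeta> :: "'a set"
        show "f \<zeta> t = ennreal (cmod (G (insert t \<xi>)) * C ^ card \<xi>) * ennreal (\<bar>Kb b \<xi> \<zeta> t\<bar> * C ^ card \<zeta>)"
          unfolding f_def using C by (subst ennreal_mult[symmetric]) (auto simp: ac_simps)
      qed
      also have "\<dots> = ennreal (cmod (G (insert t \<xi>)) * C ^ card \<xi>) * LP_nn (\<lambda>\<zeta>. ennreal (\<bar>Kb b \<xi> \<zeta> t\<bar> * C ^ card \<zeta>))"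
        by (rule LP_cmult[OF Kb_fix_smeas_enn[OF b \<xi>]])
      also have "\<dots> = Hm C G b (insert t \<xi>) t"
      proof -
        have e1: "insert t \<xi> - {t} = \<xi>" using elim by auto
        have e2: "card (insert t \<xi>) - 1 = card \<xi>" using elim \<xi> by simp
        show ?thesis unfolding Hm_def e1 e2 Kb_def ..
      qed
      finally show ?case .
    qed
  qed
  finally show ?thesis .
qed

lemma bsum_omega:
  fixes d b :: "'a::euclidean_space \<Rightarrow> 'a set \<Rightarrow> real" and G :: "'a set \<Rightarrow> complex"
  assumes d_nonneg: "\<And>x \<eta>. 0 \<le> d x \<eta>" and C: "C > 0" and a2: "a2 > 0"
    and hyp: "(\<Sum>x\<in>\<omega>. LP_nn (\<lambda>\<eta>. ennreal (\<bar>Kinv (\<lambda>\<zeta>. b x (\<zeta> \<union> (\<omega> - {x}))) \<eta>\<bar> * C ^ card \<eta>)))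
        \<le> ennreal (a2 * Dtot d \<omega>)"
    and \<omega>: "finite \<omega>"
  shows "(\<Sum>t\<in>\<omega>. Hm C G b \<omega> t) \<le> ennreal (a2 / C * (Dtot d \<omega> * (cmod (G \<omega>) * C ^ card \<omega>)))"
proof (cases "\<omega> = {}")
  case True
  then show ?thesis by simp
next
  case False
  have Dnn: "0 \<le> Dtot d \<omega>" unfolding Dtot_def using d_nonneg by (simp add: sum_nonneg)
  have "(\<Sum>t\<in>\<omega>. Hm C G b \<omega> t) = ennreal (cmod (G \<omega>) * C ^ (card \<omega> - 1)) *
      (\<Sum>t\<in>\<omega>. LP_nn (\<lambda>\<zeta>. ennreal (\<bar>Kinv (\<lambda>\<zeta>'. b t (\<zeta>' \<union> (\<omega> - {t}))) \<zeta>\<bar> * C ^ card \<zeta>)))"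
    unfolding Hm_def by (rule sum_distrib_left[symmetric])
  also have "\<dots> \<le> ennreal (cmod (G \<omega>) * C ^ (card \<omega> - 1)) * ennreal (a2 * Dtot d \<omega>)"
    by (rule mult_left_mono[OF hyp]) simp
  also have "\<dots> = ennreal (cmod (G \<omega>) * C ^ (card \<omega> - 1) * (a2 * Dtot d \<omega>))"
    using C a2 Dnn by (subst ennreal_mult[symmetric]) auto
  also have "cmod (G \<omega>) * C ^ (card \<omega> - 1) * (a2 * Dtot d \<omega>) = a2 / C * (Dtot d \<omega> * (cmod (G \<omega>) * C ^ card \<omega>))"
  proof -
    have "card \<omega> \<noteq> 0" using False \<omega> by simp
    then have "C ^ card \<omega> = C * C ^ (card \<omega> - 1)" by (metis Suc_pred' neq0_conv power_Suc)
    then show ?thesis using C by (simp add: field_simps)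
  qed
  finally show ?thesis .
qed


lemma GB:
  fixes d b :: "'a::euclidean_space \<Rightarrow> 'a set \<Rightarrow> real" and G :: "'a set \<Rightarrow> complex"
    and C a1 a2 :: real
  assumes d_nonneg: "\<And>x \<eta>. 0 \<le> d x \<eta>"
    and d_meas: "rate_meas d"
    and b_meas: "rate_meas b"
    and C_gt: "C > 1"
    and a1_ge: "a1 \<ge> 1"
    and a2_pos: "a2 > 0"
    and hyp_d: "\<And>\<xi>. finite \<xi> \<Longrightarrow>
      (\<Sum>x\<in>\<xi>. LP_nn (\<lambda>\<eta>. ennreal (\<bar>Kinv (\<lambda>\<zeta>. d x (\<zeta> \<union> (\<xi> - {x}))) \<eta>\<bar> * C ^ card \<eta>)))
        \<le> ennreal (a1 * Dtot d \<xi>)"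
    and hyp_b: "\<And>\<xi>. finite \<xi> \<Longrightarrow>
      (\<Sum>x\<in>\<xi>. LP_nn (\<lambda>\<eta>. ennreal (\<bar>Kinv (\<lambda>\<zeta>. b x (\<zeta> \<union> (\<xi> - {x}))) \<eta>\<bar> * C ^ card \<eta>)))
        \<le> ennreal (a2 * Dtot d \<xi>)"
    and G: "LP_meas G"
  shows "LP_nn (\<lambda>\<eta>. \<Sum>\<xi>\<in>Pow \<eta>. Fb C b G \<xi> (\<eta> - \<xi>)) \<le> ennreal (a2 / C) * normC C (\<lambda>\<eta>. of_real (Dtot d \<eta>) * G \<eta>)"
    and "normC C (L1 d b G) \<le> ennreal (a1 - 1 + a2 / C) * normC C (\<lambda>\<eta>. of_real (Dtot d \<eta>) * G \<eta>)"
proof -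
  have G': "smeas G" by (rule smeas_LP_meas[OF G])
  have C0: "C \<ge> 0" "C > 0" using C_gt by auto
  define nD where "nD \<eta> = ennreal (cmod (of_real (Dtot d \<eta>) * G \<eta>) * C ^ card \<eta>)" for \<eta>
  have X: "normC C (\<lambda>\<eta>. of_real (Dtot d \<eta>) * G \<eta>) = LP_nn nD" unfolding normC_def nD_def ..
  have Dnn: "0 \<le> Dtot d \<eta>" for \<eta> unfolding Dtot_def using d_nonneg by (simp add: sum_nonneg)
  have nDs: "smeas nD"
  proof -
    have s1: "smeas (\<lambda>\<eta>. complex_of_real (Dtot d \<eta>))" by (rule smeas_comp[OF Dtot_smeas[OF d_meas]]) measurable
    have "smeas (\<lambda>\<eta>. complex_of_real (Dtot d \<eta>) * G \<eta>)" by (rule smeas_mult[OF s1 G'])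
    then have "smeas (\<lambda>\<eta>. cmod (complex_of_real (Dtot d \<eta>) * G \<eta>))" by (rule smeas_comp) measurable
    then have "smeas (\<lambda>\<eta>. cmod (complex_of_real (Dtot d \<eta>) * G \<eta>) * C ^ card \<eta>)" by (intro smeas_mult smeas_cardfun)
    then show ?thesis unfolding nD_def by (rule smeas_comp) measurable
  qed
  have nDeq: "ennreal (c * (Dtot d \<xi> * (cmod (G \<xi>) * C ^ card \<xi>))) = ennreal c * nD \<xi>" if c: "c \<ge> 0" for c \<xi>
  proof -
    have "cmod (of_real (Dtot d \<xi>) * G \<xi>) = Dtot d \<xi> * cmod (G \<xi>)"
      using Dnn[of \<xi>] by (simp add: norm_mult)
    then show ?thesis unfolding nD_def using c C0 Dnn[of \<xi>]
      by (subst ennreal_mult[symmetric]) (auto simp: ac_simps)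
  qed
  have a1': "a1 - 1 \<ge> 0" using a1_ge by simp
  have a2': "a2 / C \<ge> 0" using a2_pos C0 by simp
  have P1: "LP_nn (\<lambda>\<eta>. \<Sum>\<xi>\<in>Pow \<eta>. Fd C d G \<xi> (\<eta> - \<xi>)) \<le> ennreal (a1 - 1) * LP_nn nD"
  proof -
    have "LP_nn (\<lambda>\<eta>. \<Sum>\<xi>\<in>Pow \<eta>. Fd C d G \<xi> (\<eta> - \<xi>)) \<le> LP_nn (\<lambda>\<xi>. LP_nn (Fd C d G \<xi>))"
      by (rule SPLIT[OF Fd_smeas2[OF d_meas G']])
    also have "\<dots> \<le> LP_nn (\<lambda>\<xi>. ennreal ((a1 - 1) * (Dtot d \<xi> * (cmod (G \<xi>) * C ^ card \<xi>))))"
      by (rule LP_mono, rule dpart_xi[OF d_nonneg d_meas C0(1) a1_ge _ hyp_d]) auto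
    also have "\<dots> = LP_nn (\<lambda>\<xi>. ennreal (a1 - 1) * nD \<xi>)"
      by (rule LP_cong) (rule nDeq[OF a1'])
    also have "\<dots> = ennreal (a1 - 1) * LP_nn nD" by (rule LP_cmult[OF nDs])
    finally show ?thesis .
  qed
  show P2: "LP_nn (\<lambda>\<eta>. \<Sum>\<xi>\<in>Pow \<eta>. Fb C b G \<xi> (\<eta> - \<xi>)) \<le> ennreal (a2 / C) * normC C (\<lambda>\<eta>. of_real (Dtot d \<eta>) * G \<eta>)"
  proof -
    have "LP_nn (\<lambda>\<eta>. \<Sum>\<xi>\<in>Pow \<eta>. Fb C b G \<xi> (\<eta> - \<xi>)) \<le> LP_nn (\<lambda>\<xi>. LP_nn (Fb C b G \<xi>))"
      by (rule SPLIT[OF Fb_smeas2[OF b_meas G']])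
    also have "\<dots> = LP_nn (\<lambda>\<xi>. \<integral>\<^sup>+t. Hm C G b (insert t \<xi>) t \<partial>lborel)"
      by (rule LP_cong) (rule bpart_xi[OF b_meas G' C0(1)])
    also have "\<dots> \<le> LP_nn (\<lambda>\<omega>. \<Sum>t\<in>\<omega>. Hm C G b \<omega> t)"
      by (rule Mecke[OF Hm_smeasP[OF b_meas G']])
    also have "\<dots> \<le> LP_nn (\<lambda>\<omega>. ennreal (a2 / C * (Dtot d \<omega> * (cmod (G \<omega>) * C ^ card \<omega>))))"
      by (rule LP_mono, rule bsum_omega[OF d_nonneg C0(2) a2_pos hyp_b]) auto
    also have "\<dots> = LP_nn (\<lambda>\<xi>. ennreal (a2 / C) * nD \<xi>)"
      by (rule LP_cong) (rule nDeq[OF a2'])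
    also have "\<dots> = ennreal (a2 / C) * LP_nn nD" by (rule LP_cmult[OF nDs])
    finally show ?thesis unfolding X .
  qed
  have "normC C (L1 d b G) \<le> LP_nn (\<lambda>\<eta>. (\<Sum>\<xi>\<in>Pow \<eta>. Fd C d G \<xi> (\<eta> - \<xi>)) + (\<Sum>\<xi>\<in>Pow \<eta>. Fb C b G \<xi> (\<eta> - \<xi>)))"
    unfolding normC_def by (rule LP_mono) (rule PW1[OF _ C0(1)])
  also have "\<dots> = LP_nn (\<lambda>\<eta>. \<Sum>\<xi>\<in>Pow \<eta>. Fd C d G \<xi> (\<eta> - \<xi>)) + LP_nn (\<lambda>\<eta>. \<Sum>\<xi>\<in>Pow \<eta>. Fb C b G \<xi> (\<eta> - \<xi>))"
    by (rule LP_add[OF SPLITm[OF Fd_smeas2[OF d_meas G']] SPLITm[OF Fb_smeas2[OF b_meas G']]])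
  also have "\<dots> \<le> ennreal (a1 - 1) * LP_nn nD + ennreal (a2 / C) * LP_nn nD"
    using P1 P2 unfolding X by (rule add_mono)
  also have "\<dots> = ennreal (a1 - 1 + a2 / C) * LP_nn nD"
    using a1' a2' by (simp add: distrib_right)
  finally show "normC C (L1 d b G) \<le> ennreal (a1 - 1 + a2 / C) * normC C (\<lambda>\<eta>. of_real (Dtot d \<eta>) * G \<eta>)"
    unfolding X .
qed


lemma birth_meas:
  fixes b :: "'a::euclidean_space \<Rightarrow> 'a set \<Rightarrow> real" and G :: "'a set \<Rightarrow> complex"
  assumes b: "rate_meas b" and G: "smeas G" and \<eta>: "finite \<eta>" and \<xi>: "\<xi> \<subseteq> \<eta>"
  shows "birth_integrand b G \<eta> \<xi> \<in> borel_measurable lborel"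
proof -
  have fx: "finite \<xi>" using \<eta> \<xi> finite_subset by blast
  have k: "smeas2P (\<lambda>\<xi> \<zeta> t. complex_of_real (Kb b \<xi> \<zeta> t))" by (rule smeas2P_comp[OF Kb_smeas2P'[OF b]]) measurable
  have sm: "smeas2P (\<lambda>\<xi> \<zeta> t. G (insert t \<xi>) * complex_of_real (Kb b \<xi> \<zeta> t))"
    by (intro smeas2P_mult ins_smeas2P[OF G] k)
  have f2: "finite (\<eta> - \<xi>)" using \<eta> by simp
  have "(\<lambda>t. G (insert t \<xi>) * complex_of_real (Kb b \<xi> (\<eta> - \<xi>) t)) \<in> borel_measurable lborel"
    using smeasP_fix2[OF smeas2P_fix[OF sm fx] f2] .
  moreover have "(\<lambda>t. G (insert t \<xi>) * complex_of_real (Kb b \<xi> (\<eta> - \<xi>) t)) = birth_integrand b G \<eta> \<xi>"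
    unfolding birth_integrand_def[abs_def] Kb_def ..
  ultimately show ?thesis by (simp only:)
qed

lemma LP_ae_lemma:
  fixes b :: "'a::euclidean_space \<Rightarrow> 'a set \<Rightarrow> real" and G :: "'a set \<Rightarrow> complex"
  assumes b: "rate_meas b" and G: "smeas G" and C: "C > 0"
    and fin: "LP_nn (\<lambda>\<eta>. \<Sum>\<xi>\<in>Pow \<eta>. Fb C b G \<xi> (\<eta> - \<xi>)) < \<infinity>"
  shows "LP_ae (\<lambda>\<eta>. \<forall>\<xi>\<subseteq>\<eta>. integrable lborel (birth_integrand b G \<eta> \<xi>))"
proof -
  define B where "B \<eta> = (\<Sum>\<xi>\<in>Pow \<eta>. Fb C b G \<xi> (\<eta> - \<xi>))" for \<eta>
  define P where "P \<eta> = (\<forall>\<xi>\<subseteq>\<eta>. integrable lborel (birth_integrand b G \<eta> \<xi>))" for \<eta>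
  have Bs: "smeas B" unfolding B_def by (rule SPLITm[OF Fb_smeas2[OF b G]])
  have Binf: "B \<eta> = \<infinity>" if \<eta>: "finite \<eta>" and nP: "\<not> P \<eta>" for \<eta>
  proof -
    from nP obtain \<xi> where x: "\<xi> \<subseteq> \<eta>" and ni: "\<not> integrable lborel (birth_integrand b G \<eta> \<xi>)"
      unfolding P_def by blast
    have bm: "birth_integrand b G \<eta> \<xi> \<in> borel_measurable lborel" by (rule birth_meas[OF b G \<eta> x])
    have inf: "(\<integral>\<^sup>+t. ennreal (cmod (birth_integrand b G \<eta> \<xi> t)) \<partial>lborel) = \<infinity>"
    proof -
      have "\<not> (\<integral>\<^sup>+t. ennreal (cmod (birth_integrand b G \<eta> \<xi> t)) \<partial>lborel) < \<infinity>"
      proof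
        assume "(\<integral>\<^sup>+t. ennreal (cmod (birth_integrand b G \<eta> \<xi> t)) \<partial>lborel) < \<infinity>"
        then have "integrable lborel (birth_integrand b G \<eta> \<xi>)" by (rule integrableI_bounded[OF bm])
        then show False using ni by contradiction
      qed
      then show ?thesis by (simp add: less_top[symmetric])
    qed
    have "Fb C b G \<xi> (\<eta> - \<xi>) = (\<integral>\<^sup>+t. ennreal (cmod (birth_integrand b G \<eta> \<xi> t)) * ennreal (C ^ card \<eta>) \<partial>lborel)"
    proof -
      have "ennreal (cmod (G (insert t \<xi>)) * \<bar>Kb b \<xi> (\<eta> - \<xi>) t\<bar> * C ^ card \<xi> * C ^ card (\<eta> - \<xi>))
          = ennreal (cmod (birth_integrand b G \<eta> \<xi> t)) * ennreal (C ^ card \<eta>)" for t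
        using card_split[OF \<eta> x, of C] C
        by (subst ennreal_mult[symmetric]) (auto simp: birth_integrand_def Kb_def norm_mult mult.assoc)
      then show ?thesis unfolding Fb_def by simp
    qed
    also have "\<dots> = (\<integral>\<^sup>+t. ennreal (cmod (birth_integrand b G \<eta> \<xi> t)) \<partial>lborel) * ennreal (C ^ card \<eta>)"
      by (rule nn_integral_multc) (use bm in measurable)
    also have "\<dots> = \<infinity>" using inf C by (simp add: ennreal_top_mult)
    finally have "Fb C b G \<xi> (\<eta> - \<xi>) = \<infinity>" .
    moreover have "Fb C b G \<xi> (\<eta> - \<xi>) \<le> B \<eta>"
      unfolding B_def by (rule member_le_sum) (use x \<eta> in auto)
    ultimately show ?thesis by (simp add: top_unique)
  qed
  have "LP_nn (\<lambda>\<eta>. if P \<eta> then 0 else 1) \<le> 0"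
  proof (rule ennreal_le_epsilon)
    fix e :: real assume e: "0 < e"
    define L where "L = enn2real (LP_nn B)"
    have L: "LP_nn B = ennreal L" "0 \<le> L" unfolding L_def using fin unfolding B_def
      by (auto simp: ennreal_enn2real_if)
    define e' where "e' = e / (L + 1)"
    have e': "0 < e'" unfolding e'_def using e L by simp
    have "LP_nn (\<lambda>\<eta>. if P \<eta> then 0 else 1) \<le> LP_nn (\<lambda>\<eta>. ennreal e' * B \<eta>)"
    proof (rule LP_mono)
      fix \<eta> :: "'a set" assume \<eta>: "finite \<eta>"
      show "(if P \<eta> then 0 else 1) \<le> ennreal e' * B \<eta>"
        using Binf[OF \<eta>] e' by (auto simp: ennreal_mult_top)
    qed
    also have "\<dots> = ennreal e' * LP_nn B" by (rule LP_cmult[OF Bs])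
    also have "\<dots> = ennreal (e' * L)" using L e' by (simp add: ennreal_mult)
    also have "\<dots> \<le> ennreal e"
    proof (rule ennreal_leI)
      have "e' * L = e * (L / (L + 1))" unfolding e'_def by simp
      also have "\<dots> \<le> e * 1" using e L by (intro mult_left_mono) auto
      finally show "e' * L \<le> e" by simp
    qed
    finally show "LP_nn (\<lambda>\<eta>. if P \<eta> then 0 else 1) \<le> 0 + ennreal e" by simp
  qed
  then show ?thesis unfolding LP_ae_def P_def by simp
qed


theorem lemma2:
  fixes d b :: "'a::euclidean_space \<Rightarrow> 'a set \<Rightarrow> real"
    and C a1 a2 :: real
  assumes d_nonneg: "\<And>x \<eta>. 0 \<le> d x \<eta>"
    and b_nonneg: "\<And>x \<eta>. 0 \<le> b x \<eta>"
    and d_meas: "rate_meas d"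
    and b_meas: "rate_meas b"
    and C_gt: "C > 1"
    and a1_ge: "a1 \<ge> 1"
    and a2_pos: "a2 > 0"
    and hyp_d: "\<And>\<xi>. finite \<xi> \<Longrightarrow>
      (\<Sum>x\<in>\<xi>. LP_nn (\<lambda>\<eta>. ennreal (\<bar>Kinv (\<lambda>\<zeta>. d x (\<zeta> \<union> (\<xi> - {x}))) \<eta>\<bar> * C ^ card \<eta>)))
        \<le> ennreal (a1 * Dtot d \<xi>)"
    and hyp_b: "\<And>\<xi>. finite \<xi> \<Longrightarrow>
      (\<Sum>x\<in>\<xi>. LP_nn (\<lambda>\<eta>. ennreal (\<bar>Kinv (\<lambda>\<zeta>. b x (\<zeta> \<union> (\<xi> - {x}))) \<eta>\<bar> * C ^ card \<eta>)))
        \<le> ennreal (a2 * Dtot d \<xi>)"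
  shows "(\<forall>G\<in>DomD C d.
            LP_ae (\<lambda>\<eta>. \<forall>\<xi>\<subseteq>\<eta>. integrable lborel (birth_integrand b G \<eta> \<xi>))
            \<and> L1 d b G \<in> LC C)
       \<and> (\<forall>z::complex. Re z > 0 \<longrightarrow> (\<forall>H\<in>LC C.
            normC C (L1 d b (\<lambda>\<eta>. H \<eta> / (z + of_real (Dtot d \<eta>))))
              \<le> ennreal (a1 - 1 + a2 / C) * normC C H))
       \<and> (\<forall>G\<in>DomD C d.
            normC C (L1 d b G) \<le> ennreal (a1 - 1 + a2 / C) * normC C (L0 d G))"
proof (intro conjI ballI allI impI)
  have GB1: "LP_nn (\<lambda>\<eta>. \<Sum>\<xi>\<in>Pow \<eta>. Fb C b G \<xi> (\<eta> - \<xi>)) \<le> ennreal (a2 / C) * normC C (\<lambda>\<eta>. of_real (Dtot d \<eta>) * G \<eta>)"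
    if "LP_meas G" for G
    by (rule GB(1)[of d b C a1 a2 G]; (fact assms that)?)
  have GB2: "normC C (L1 d b G) \<le> ennreal (a1 - 1 + a2 / C) * normC C (\<lambda>\<eta>. of_real (Dtot d \<eta>) * G \<eta>)"
    if "LP_meas G" for G
    by (rule GB(2)[of d b C a1 a2 G]; (fact assms that)?)
  have C0: "C > 0" using C_gt by simp
  have Dnn: "0 \<le> Dtot d \<eta>" for \<eta> unfolding Dtot_def using d_nonneg by (simp add: sum_nonneg)
  have L0eq: "normC C (L0 d G) = normC C (\<lambda>\<eta>. of_real (Dtot d \<eta>) * G \<eta>)" for G
    unfolding normC_def L0_def by simp
  {
    fix G assume G: "G \<in> DomD C d"
    have Gm: "LP_meas G" using G unfolding DomD_def LC_def by simp
    have DGfin: "normC C (\<lambda>\<eta>. of_real (Dtot d \<eta>) * G \<eta>) < \<infinity>" using G unfolding DomD_def LC_def by simp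
    have fin: "LP_nn (\<lambda>\<eta>. \<Sum>\<xi>\<in>Pow \<eta>. Fb C b G \<xi> (\<eta> - \<xi>)) < \<infinity>"
    proof -
      have "ennreal (a2 / C) * normC C (\<lambda>\<eta>. of_real (Dtot d \<eta>) * G \<eta>) < \<infinity>"
        using DGfin by (simp add: ennreal_mult_less_top)
      then show ?thesis using GB1[OF Gm] by (rule le_less_trans[rotated])
    qed
    show "LP_ae (\<lambda>\<eta>. \<forall>\<xi>\<subseteq>\<eta>. integrable lborel (birth_integrand b G \<eta> \<xi>))"
      by (rule LP_ae_lemma[OF b_meas smeas_LP_meas[OF Gm] C0 fin])
    have "normC C (L1 d b G) < \<infinity>"
    proof -
      have "ennreal (a1 - 1 + a2 / C) * normC C (\<lambda>\<eta>. of_real (Dtot d \<eta>) * G \<eta>) < \<infinity>"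
        using DGfin by (simp add: ennreal_mult_less_top)
      then show ?thesis using GB2[OF Gm] by (rule le_less_trans[rotated])
    qed
    then show "L1 d b G \<in> LC C"
      unfolding LC_def using L1_meas[OF d_meas b_meas Gm] by simp
    show "normC C (L1 d b G) \<le> ennreal (a1 - 1 + a2 / C) * normC C (L0 d G)"
      unfolding L0eq by (rule GB2[OF Gm])
  }
  fix z :: complex and H :: "'a set \<Rightarrow> complex" assume z: "0 < Re z" and H: "H \<in> LC C"
  define G where "G \<eta> = H \<eta> / (z + of_real (Dtot d \<eta>))" for \<eta> :: "'a set"
  have Hm: "smeas H" using H unfolding LC_def by (simp add: smeas_LP_meas)
  have Gm: "LP_meas G"
  proof -
    have "smeas (\<lambda>\<eta>. inverse (z + complex_of_real (Dtot d \<eta>)))"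
      by (rule smeas_comp[OF Dtot_smeas[OF d_meas]]) measurable
    then have "smeas (\<lambda>\<eta>. H \<eta> * inverse (z + complex_of_real (Dtot d \<eta>)))"
      by (rule smeas_mult[OF Hm])
    then show ?thesis unfolding G_def by (simp add: divide_inverse LP_meas_smeas)
  qed
  have le: "normC C (\<lambda>\<eta>. of_real (Dtot d \<eta>) * G \<eta>) \<le> normC C H"
    unfolding normC_def
  proof (rule LP_mono)
    fix \<eta> :: "'a set"
    have pos: "Dtot d \<eta> \<le> cmod (z + of_real (Dtot d \<eta>))"
    proof -
      have "Dtot d \<eta> \<le> Re (z + of_real (Dtot d \<eta>))" using z by simp
      also have "\<dots> \<le> cmod (z + of_real (Dtot d \<eta>))" by (rule complex_Re_le_cmod)
      finally show ?thesis .
    qed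
    have pos2: "0 < cmod (z + of_real (Dtot d \<eta>))"
    proof -
      have "0 < Re (z + of_real (Dtot d \<eta>))" using z Dnn[of \<eta>] by simp
      also have "\<dots> \<le> cmod (z + of_real (Dtot d \<eta>))" by (rule complex_Re_le_cmod)
      finally show ?thesis .
    qed
    have "cmod (of_real (Dtot d \<eta>) * G \<eta>) = Dtot d \<eta> / cmod (z + of_real (Dtot d \<eta>)) * cmod (H \<eta>)"
      unfolding G_def using Dnn[of \<eta>] by (simp add: norm_mult norm_divide)
    also have "\<dots> \<le> 1 * cmod (H \<eta>)"
      using pos pos2 Dnn[of \<eta>] by (intro mult_right_mono) (auto simp: divide_le_eq_1)
    finally have "cmod (of_real (Dtot d \<eta>) * G \<eta>) * C ^ card \<eta> \<le> cmod (H \<eta>) * C ^ card \<eta>"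
      using C0 by (intro mult_right_mono) auto
    then show "ennreal (cmod (of_real (Dtot d \<eta>) * G \<eta>) * C ^ card \<eta>) \<le> ennreal (cmod (H \<eta>) * C ^ card \<eta>)"
      by (rule ennreal_leI)
  qed
  have "normC C (L1 d b G) \<le> ennreal (a1 - 1 + a2 / C) * normC C (\<lambda>\<eta>. of_real (Dtot d \<eta>) * G \<eta>)"
    by (rule GB2[OF Gm])
  also have "\<dots> \<le> ennreal (a1 - 1 + a2 / C) * normC C H"
    by (rule mult_left_mono[OF le]) simp
  finally show "normC C (L1 d b (\<lambda>\<eta>. H \<eta> / (z + of_real (Dtot d \<eta>)))) \<le> ennreal (a1 - 1 + a2 / C) * normC C H"
    unfolding G_def .
qed


end
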